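(* In $\mathscr{B}_n^k$, for every $i$ with $1\le i\le n-1$ and every integer $p$: (I) $e_i (Y_i')^{p} e_i$ lies in the $R$-span of $\{Y^{s_1}(Y_2')^{s_2}\cdots (Y_{i-1}')^{s_{i-1}} e_i : s_1,\dots,s_{i-1}\in\mathbb Z\}$; (II) $X_i (Y_i')^{p} e_i$ lies in the $R$-span of $\{Y^{s_1}(Y_2')^{s_2}\cdots (Y_{i-1}')^{s_{i-1}}(Y_i')^{s_i} e_i : s_1,\dots,s_i\in\mathbb Z,\ |s_i|\le |p|\}$; (III) $e_i (Y_i')^{p} X_i$ lies in the $R$-span of $\{e_i Y^{s_1}(Y_2')^{s_2}\cdots (Y_{i-1}')^{s_{i-1}}(Y_i')^{s_i} : s_1,\dots,s_i\in\mathbb Z,\ |s_i|\le |p|\}$.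
   Context: Fix integers $n\ge 1$, $k\ge 1$. Let $R$ be a unital commutative ring containing units $q_0,q,\lambda$ and further elements $q_1,\dots,q_{k-1},A_0,\dots,A_{k-1}$ such that $\lambda-\lambda^{-1}=\delta(1-A_0)$, where $\delta:=q-q^{-1}$. The cyclotomic BMW algebra $\mathscr{B}_n^k=\mathscr{B}_n^k(R)$ is the unital associative $R$-algebra generated by $Y^{\pm1},X_1^{\pm1},\dots,X_{n-1}^{\pm1},e_1,\dots,e_{n-1}$ subject to the following relations (for all indices for which they make sense): $X_i-X_i^{-1}=\delta(1-e_i)$; $X_iX_j=X_jX_i$, $X_ie_j=e_jX_i$, $e_ie_j=e_je_i$ for $|i-j|\ge 2$; $X_iX_{i+1}X_i=X_{i+1}X_iX_{i+1}$; $X_ie_i=e_iX_i=\lambda e_i$; $X_iX_je_i=e_je_i=e_jX_iX_j$ for $|i-j|=1$; $e_ie_{i\pm1}e_i=e_i$; $e_i^2=A_0e_i$; $Y^k=\sum_{i=0}^{k-1}q_iY^i$; $X_1YX_1Y=YX_1YX_1$; $YX_i=X_iY$ and $Ye_i=e_iY$ for $i>1$; $YX_1Ye_1=\lambda^{-1}e_1=e_1YX_1Y$; $e_1Y^me_1=A_me_1$ for $0\le m\le k-1$. For $1\le i\le n$ put $Y_i':=X_{i-1}\cdots X_2X_1\,Y\,X_1X_2\cdots X_{i-1}$ (so $Y_1'=Y$). (When $i=1$ the product $Y^{s_1}\cdots(Y_{i-1}')^{s_{i-1}}$ is empty, i.e. equal to $1$.) *)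

theory Defs
  imports Main
begin

definition zpow :: "'a::monoid_mult \<Rightarrow> 'a \<Rightarrow> int \<Rightarrow> 'a" where
  "zpow u v p = (if 0 \<le> p then u ^ nat p else v ^ nat (- p))"

text \<open>Yp Y X i = X(i-1) ... X1 Y X1 ... X(i-1)  (Y_i'), for i >= 1.
  Applied to the inverses (Yinv, Xinv) it gives the inverse of Y_i'.\<close>
fun Yp :: "'a::monoid_mult \<Rightarrow> (nat \<Rightarrow> 'a) \<Rightarrow> nat \<Rightarrow> 'a" where
  "Yp Y X 0 = Y"
| "Yp Y X (Suc 0) = Y"
| "Yp Y X (Suc (Suc i)) = X (Suc i) * Yp Y X (Suc i) * X (Suc i)"

definition Ymon :: "'a::monoid_mult \<Rightarrow> 'a \<Rightarrow> (nat \<Rightarrow> 'a) \<Rightarrow> (nat \<Rightarrow> 'a) \<Rightarrow> (nat \<Rightarrow> int) \<Rightarrow> nat \<Rightarrow> 'a" where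
  "Ymon Y Yinv X Xinv s m =
     prod_list (map (\<lambda>j. zpow (Yp Y X j) (Yp Yinv Xinv j) (s j)) [1..<Suc m])"

definition rspan :: "('r \<Rightarrow> 'a::ring_1) \<Rightarrow> 'a set \<Rightarrow> 'a set" where
  "rspan \<phi> S = {x. \<exists>F c. finite F \<and> F \<subseteq> S \<and> x = (\<Sum>s\<in>F. \<phi> (c s) * s)}"

definition is_R_algebra :: "('r::comm_ring_1 \<Rightarrow> 'a::ring_1) \<Rightarrow> bool" where
  "is_R_algebra \<phi> \<longleftrightarrow> \<phi> 1 = 1 \<and> (\<forall>a b. \<phi> (a + b) = \<phi> a + \<phi> b) \<and>
     (\<forall>a b. \<phi> (a * b) = \<phi> a * \<phi> b) \<and> (\<forall>r x. \<phi> r * x = x * \<phi> r)"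

text \<open>Defining relations of the cyclotomic BMW algebra B_n^k, imposed on elements
  Y, Yinv, X i, Xinv i, e i (1 <= i <= n-1) of an R-algebra.  Parameters:
  qp = q, qi = q^{-1}, lam = lambda, lami = lambda^{-1}, qq j = q_j, A j = A_j.\<close>
definition cbmw_rels ::
  "nat \<Rightarrow> nat \<Rightarrow> ('r::comm_ring_1 \<Rightarrow> 'a::ring_1) \<Rightarrow> 'r \<Rightarrow> 'r \<Rightarrow> 'r \<Rightarrow> 'r \<Rightarrow>
   (nat \<Rightarrow> 'r) \<Rightarrow> (nat \<Rightarrow> 'r) \<Rightarrow> 'a \<Rightarrow> 'a \<Rightarrow> (nat \<Rightarrow> 'a) \<Rightarrow> (nat \<Rightarrow> 'a) \<Rightarrow> (nat \<Rightarrow> 'a) \<Rightarrow> bool"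
where
  "cbmw_rels n k \<phi> qp qi lam lami qq A Y Yinv X Xinv e \<longleftrightarrow>
    (let \<delta> = qp - qi; ok = (\<lambda>i. 1 \<le> i \<and> i \<le> n - 1) in
     Y * Yinv = 1 \<and> Yinv * Y = 1 \<and>
     (\<forall>i. ok i \<longrightarrow> X i * Xinv i = 1 \<and> Xinv i * X i = 1) \<and>
     (\<forall>i. ok i \<longrightarrow> X i - Xinv i = \<phi> \<delta> * (1 - e i)) \<and>
     (\<forall>i j. ok i \<and> ok j \<and> (i + 2 \<le> j \<or> j + 2 \<le> i) \<longrightarrow>
        X i * X j = X j * X i \<and> X i * e j = e j * X i \<and> e i * e j = e j * e i) \<and>
     (\<forall>i. ok i \<and> ok (i + 1) \<longrightarrow> X i * X (i+1) * X i = X (i+1) * X i * X (i+1)) \<and>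
     (\<forall>i. ok i \<longrightarrow> X i * e i = \<phi> lam * e i \<and> e i * X i = \<phi> lam * e i) \<and>
     (\<forall>i j. ok i \<and> ok j \<and> (j = i + 1 \<or> i = j + 1) \<longrightarrow>
        X i * X j * e i = e j * e i \<and> e j * e i = e j * X i * X j \<and>
        e i * e j * e i = e i) \<and>
     (\<forall>i. ok i \<longrightarrow> e i * e i = \<phi> (A 0) * e i) \<and>
     Y ^ k = (\<Sum>i<k. \<phi> (qq i) * Y ^ i) \<and>
     (ok 1 \<longrightarrow> X 1 * Y * X 1 * Y = Y * X 1 * Y * X 1) \<and>
     (\<forall>i. ok i \<and> 1 < i \<longrightarrow> Y * X i = X i * Y \<and> Y * e i = e i * Y) \<and>
     (ok 1 \<longrightarrow> Y * X 1 * Y * e 1 = \<phi> lami * e 1 \<and> e 1 * Y * X 1 * Y = \<phi> lami * e 1) \<and>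
     (ok 1 \<longrightarrow> (\<forall>m<k. e 1 * Y ^ m * e 1 = \<phi> (A m) * e 1)))"

end

theory Submission
  imports Defs
begin


lemma zpow_nonneg: "0 \<le> p \<Longrightarrow> zpow u v p = u ^ nat p" by (simp add: zpow_def)
lemma zpow_neg: "p < 0 \<Longrightarrow> zpow u v p = v ^ nat (-p)" by (simp add: zpow_def)
lemma zpow_0[simp]: "zpow u v 0 = 1" by (simp add: zpow_def)

lemma zpow_succ:
  fixes u v :: "'a::monoid_mult"
  assumes uv: "u*v = 1" and vu: "v*u = 1"
  shows "zpow u v (p+1) = u * zpow u v p"
proof (cases "0 \<le> p")
  case True
  then have "nat (p+1) = Suc (nat p)" by simp
  then show ?thesis using True by (simp add: zpow_def)
next
  case False
  then have "nat (-p) = Suc (nat (-(p+1)))" by simp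
  then have "zpow u v p = v * zpow u v (p+1)"
    using False by (auto simp: zpow_def)
  then have "u * zpow u v p = (u*v) * zpow u v (p+1)" by (simp add: mult.assoc)
  then show ?thesis using uv by simp
qed

lemma zpow_succ':
  fixes u v :: "'a::monoid_mult"
  assumes uv: "u*v = 1" and vu: "v*u = 1"
  shows "zpow u v (p+1) = zpow u v p * u"
proof (cases "0 \<le> p")
  case True
  then have "nat (p+1) = Suc (nat p)" by simp
  then show ?thesis using True by (simp add: zpow_def power_commutes)
next
  case False
  then have "nat (-p) = Suc (nat (-(p+1)))" by simp
  then have "zpow u v p = zpow u v (p+1) * v"
    using False by (auto simp: zpow_def power_commutes)
  then have "zpow u v p * u = zpow u v (p+1) * (v*u)" by (simp add: mult.assoc)
  then show ?thesis using vu by simp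
qed

lemma zpow_pred:
  fixes u v :: "'a::monoid_mult"
  assumes uv: "u*v = 1" and vu: "v*u = 1"
  shows "zpow u v (p-1) = v * zpow u v p"
proof -
  have "zpow u v p = u * zpow u v (p-1)" using zpow_succ[OF uv vu, of "p-1"] by simp
  then have "v * zpow u v p = (v*u) * zpow u v (p-1)" by (simp add: mult.assoc)
  then show ?thesis using vu by simp
qed

lemma zpow_pred':
  fixes u v :: "'a::monoid_mult"
  assumes uv: "u*v = 1" and vu: "v*u = 1"
  shows "zpow u v (p-1) = zpow u v p * v"
proof -
  have "zpow u v p = zpow u v (p-1) * u" using zpow_succ'[OF uv vu, of "p-1"] by simp
  then have "zpow u v p * v = zpow u v (p-1) * (u*v)" by (simp add: mult.assoc)
  then show ?thesis using uv by simp
qed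

lemma zpow_add:
  fixes u v :: "'a::monoid_mult"
  assumes uv: "u*v = 1" and vu: "v*u = 1"
  shows "zpow u v (p+q) = zpow u v p * zpow u v q"
proof (induction q rule: int_induct[where k=0])
  case base then show ?case by simp
next
  case (step1 q)
  have "zpow u v (p+(q+1)) = zpow u v (p+q) * u" using zpow_succ'[OF uv vu, of "p+q"] by (simp add: add.assoc)
  also have "\<dots> = zpow u v p * (zpow u v q * u)" using step1 by (simp add: mult.assoc)
  also have "\<dots> = zpow u v p * zpow u v (q+1)" using zpow_succ'[OF uv vu, of q] by simp
  finally show ?case .
next
  case (step2 q)
  have "zpow u v (p+(q-1)) = zpow u v (p+q) * v" using zpow_pred'[OF uv vu, of "p+q"] by (simp add: algebra_simps)
  also have "\<dots> = zpow u v p * (zpow u v q * v)" using step2 by (simp add: mult.assoc)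
  also have "\<dots> = zpow u v p * zpow u v (q-1)" using zpow_pred'[OF uv vu, of q] by simp
  finally show ?case .
qed

lemma pow_comm:
  fixes x w :: "'a::monoid_mult"
  assumes "x*w = w*x"
  shows "x^m * w = w * x^m"
proof (induction m)
  case (Suc m)
  have "x^Suc m * w = x * (x^m * w)" by (simp add: mult.assoc)
  also have "\<dots> = (x * w) * x^m" using Suc by (simp add: mult.assoc)
  also have "\<dots> = w * x^Suc m" using assms by (simp add: mult.assoc)
  finally show ?case .
qed simp

lemma zpow_comm:
  fixes u v w :: "'a::monoid_mult"
  assumes "u*w = w*u" "v*w = w*v"
  shows "zpow u v p * w = w * zpow u v p"
  unfolding zpow_def using assms by (auto intro: pow_comm)

lemma inv_comm:
  fixes u v w :: "'a::monoid_mult"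
  assumes "u*v = 1" "v*u = 1" "u*w = w*u"
  shows "v*w = w*v"
proof -
  have "v*w = v*w*(u*v)" using assms by simp
  also have "\<dots> = v*(w*u)*v" by (simp add: mult.assoc)
  also have "\<dots> = v*(u*w)*v" using assms by simp
  also have "\<dots> = (v*u)*w*v" by (simp add: mult.assoc)
  finally show ?thesis using assms by simp
qed

lemma zpow_1: "zpow u v 1 = u" by (simp add: zpow_def)
lemma zpow_m1: "zpow u v (-1) = v" by (simp add: zpow_def)

context
  fixes \<phi> :: "'r::comm_ring_1 \<Rightarrow> 'a::ring_1"
  assumes alg: "is_R_algebra \<phi>"
begin

lemma phi1: "\<phi> 1 = 1" using alg unfolding is_R_algebra_def by blast
lemma phiadd: "\<phi> (a+b) = \<phi> a + \<phi> b" using alg unfolding is_R_algebra_def by blast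
lemma phimult: "\<phi> (a*b) = \<phi> a * \<phi> b" using alg unfolding is_R_algebra_def by blast
lemma phicomm: "\<phi> r * x = x * \<phi> r" using alg unfolding is_R_algebra_def by blast
lemma phi0: "\<phi> 0 = 0" using phiadd[of 0 0] by (metis add_cancel_right_right add_0)
lemma phiminus: "\<phi> (-a) = - \<phi> a"
proof -
  have "\<phi> (-a) + \<phi> a = 0" using phiadd[of "-a" a] phi0 by simp
  then show ?thesis by (simp add: eq_neg_iff_add_eq_0)
qed
lemma phidiff: "\<phi> (a-b) = \<phi> a - \<phi> b" using phiadd[of a "-b"] phiminus[of b] by simp

lemma rspan_base: "x \<in> S \<Longrightarrow> x \<in> rspan \<phi> S"
  unfolding rspan_def
  by (rule CollectI, rule exI[of _ "{x}"], rule exI[of _ "\<lambda>_. 1"]) (simp add: phi1)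

lemma rspan_0: "0 \<in> rspan \<phi> S"
  unfolding rspan_def by (rule CollectI, rule exI[of _ "{}"]) simp

lemma rspan_add:
  assumes "x \<in> rspan \<phi> S" "y \<in> rspan \<phi> S" shows "x + y \<in> rspan \<phi> S"
proof -
  obtain F c where F: "finite F" "F \<subseteq> S" "x = (\<Sum>s\<in>F. \<phi> (c s) * s)" using assms(1) unfolding rspan_def by blast
  obtain G d where G: "finite G" "G \<subseteq> S" "y = (\<Sum>s\<in>G. \<phi> (d s) * s)" using assms(2) unfolding rspan_def by blast
  define c' where "c' s = (if s \<in> F then c s else 0) + (if s \<in> G then d s else 0)" for s
  have fin: "finite (F \<union> G)" using F G by simp
  have "x = (\<Sum>s\<in>F\<union>G. \<phi> (if s \<in> F then c s else 0) * s)"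
    unfolding F(3) by (rule sum.mono_neutral_cong_left[OF fin]) (auto simp: phi0)
  moreover have "y = (\<Sum>s\<in>F\<union>G. \<phi> (if s \<in> G then d s else 0) * s)"
    unfolding G(3) by (rule sum.mono_neutral_cong_left[OF fin]) (auto simp: phi0)
  ultimately have "x + y = (\<Sum>s\<in>F\<union>G. \<phi> (c' s) * s)"
    by (simp only: c'_def phiadd distrib_right sum.distrib)
  then show ?thesis unfolding rspan_def using F G by blast
qed

lemma rspan_smult:
  assumes "x \<in> rspan \<phi> S" shows "\<phi> r * x \<in> rspan \<phi> S"
proof -
  obtain F c where F: "finite F" "F \<subseteq> S" "x = (\<Sum>s\<in>F. \<phi> (c s) * s)" using assms unfolding rspan_def by blast
  have "\<phi> r * x = (\<Sum>s\<in>F. \<phi> r * (\<phi> (c s) * s))" unfolding F(3) by (rule sum_distrib_left)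
  also have "\<dots> = (\<Sum>s\<in>F. \<phi> (r * c s) * s)" by (rule sum.cong) (simp_all only: phimult mult.assoc)
  finally have e: "\<phi> r * x = (\<Sum>s\<in>F. \<phi> (r * c s) * s)" .
  show ?thesis unfolding rspan_def
    by (rule CollectI, rule exI[of _ F], rule exI[of _ "\<lambda>s. r * c s"]) (use F e in simp)
qed

lemma rspan_uminus:
  assumes "x \<in> rspan \<phi> S" shows "- x \<in> rspan \<phi> S"
  using rspan_smult[OF assms, of "-1"] by (simp add: phiminus phi1)

lemma rspan_diff:
  assumes "x \<in> rspan \<phi> S" "y \<in> rspan \<phi> S" shows "x - y \<in> rspan \<phi> S"
  using rspan_add[OF assms(1) rspan_uminus[OF assms(2)]] by simp

lemma rspan_sum:
  assumes "finite F" "\<And>s. s \<in> F \<Longrightarrow> f s \<in> rspan \<phi> S" shows "sum f F \<in> rspan \<phi> S"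
  using assms
proof (induction F rule: finite_induct)
  case empty then show ?case by (simp add: rspan_0)
next
  case (insert x F)
  have "f x \<in> rspan \<phi> S" using insert by simp
  moreover have "sum f F \<in> rspan \<phi> S" using insert by simp
  ultimately show ?case using insert(1,2) rspan_add by simp
qed

lemma rspan_lmult:
  assumes "x \<in> rspan \<phi> S" "\<And>g. g \<in> S \<Longrightarrow> u * g \<in> rspan \<phi> T"
  shows "u * x \<in> rspan \<phi> T"
proof -
  obtain F c where F: "finite F" "F \<subseteq> S" "x = (\<Sum>s\<in>F. \<phi> (c s) * s)" using assms unfolding rspan_def by blast
  have "u * x = (\<Sum>s\<in>F. \<phi> (c s) * (u * s))"
    unfolding F(3) sum_distrib_left by (rule sum.cong) (auto, metis mult.assoc phicomm)
  also have "\<dots> \<in> rspan \<phi> T" using F by (intro rspan_sum rspan_smult assms(2)) auto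
  finally show ?thesis .
qed

lemma rspan_rmult:
  assumes "x \<in> rspan \<phi> S" "\<And>g. g \<in> S \<Longrightarrow> g * u \<in> rspan \<phi> T"
  shows "x * u \<in> rspan \<phi> T"
proof -
  obtain F c where F: "finite F" "F \<subseteq> S" "x = (\<Sum>s\<in>F. \<phi> (c s) * s)" using assms unfolding rspan_def by blast
  have "x * u = (\<Sum>s\<in>F. \<phi> (c s) * (s * u))"
    using F(3) by (simp add: sum_distrib_right mult.assoc)
  also have "\<dots> \<in> rspan \<phi> T" using F by (intro rspan_sum rspan_smult assms(2)) auto
  finally show ?thesis .
qed

lemma rspan_span:
  assumes "x \<in> rspan \<phi> S" "\<And>g. g \<in> S \<Longrightarrow> g \<in> rspan \<phi> T"
  shows "x \<in> rspan \<phi> T"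
  using rspan_lmult[OF assms(1), of 1 T] assms(2) by simp

lemma rspan_mono: "x \<in> rspan \<phi> S \<Longrightarrow> S \<subseteq> T \<Longrightarrow> x \<in> rspan \<phi> T"
  by (rule rspan_span[of x S]) (auto intro: rspan_base)

end



lemma lift: "a * b = c \<Longrightarrow> a * (b * x) = c * (x::'a::semigroup_mult)"
  by (simp add: mult.assoc[symmetric])

lemma Yp_Suc: "1 \<le> j \<Longrightarrow> Yp Y X (Suc j) = X j * Yp Y X j * X j"
  by (cases j) auto

locale cb =
  fixes n k :: nat
    and \<phi> :: "'r::comm_ring_1 \<Rightarrow> 'a::ring_1"
    and qp qi lam lami :: 'r and qq A :: "nat \<Rightarrow> 'r"
    and Y Yinv :: 'a and X Xinv e :: "nat \<Rightarrow> 'a"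
  assumes alg: "is_R_algebra \<phi>"
    and rels: "cbmw_rels n k \<phi> qp qi lam lami qq A Y Yinv X Xinv e"
    and lam: "lam * lami = 1"
    and lamrel: "lam - lami = (qp - qi) * (1 - A 0)"
    and qq0: "qq 0 dvd 1"
begin

abbreviation "d \<equiv> \<phi> (qp - qi)"
abbreviation "l \<equiv> \<phi> lam"
abbreviation "li \<equiv> \<phi> lami"
abbreviation "Yj j \<equiv> Yp Y X j"
abbreviation "Yi j \<equiv> Yp Yinv Xinv j"
abbreviation "ok i \<equiv> 1 \<le> i \<and> i \<le> n - 1"
abbreviation "sp \<equiv> rspan \<phi>"

lemmas R = rels[unfolded cbmw_rels_def Let_def]

lemma YY: "Y * Yinv = 1" "Yinv * Y = 1" using R by blast+
lemma XX: "ok i \<Longrightarrow> X i * Xinv i = 1" "ok i \<Longrightarrow> Xinv i * X i = 1" using R by blast+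
lemma Xrel: "ok i \<Longrightarrow> X i - Xinv i = d * (1 - e i)" using R by blast
lemma farX: "ok i \<Longrightarrow> ok j \<Longrightarrow> i + 2 \<le> j \<or> j + 2 \<le> i \<Longrightarrow> X i * X j = X j * X i"
  using R by blast
lemma farXe: "ok i \<Longrightarrow> ok j \<Longrightarrow> i + 2 \<le> j \<or> j + 2 \<le> i \<Longrightarrow> X i * e j = e j * X i"
  using R by blast
lemma braid: "ok i \<Longrightarrow> ok (i+1) \<Longrightarrow> X i * X (i+1) * X i = X (i+1) * X i * X (i+1)"
  using R by blast
lemma Xe: "ok i \<Longrightarrow> X i * e i = l * e i" "ok i \<Longrightarrow> e i * X i = l * e i" using R by blast+
lemma adj1: "ok i \<Longrightarrow> ok j \<Longrightarrow> j = i + 1 \<or> i = j + 1 \<Longrightarrow> X i * X j * e i = e j * e i"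
  using R by blast
lemma adj2: "ok i \<Longrightarrow> ok j \<Longrightarrow> j = i + 1 \<or> i = j + 1 \<Longrightarrow> e j * e i = e j * X i * X j"
  using R by blast
lemma adj3: "ok i \<Longrightarrow> ok j \<Longrightarrow> j = i + 1 \<or> i = j + 1 \<Longrightarrow> e i * e j * e i = e i"
  using R by blast
lemma ee: "ok i \<Longrightarrow> e i * e i = \<phi> (A 0) * e i" using R by blast
lemma Ypoly: "Y ^ k = (\<Sum>i<k. \<phi> (qq i) * Y ^ i)" using R by blast
lemma YX1: "ok 1 \<Longrightarrow> X 1 * Y * X 1 * Y = Y * X 1 * Y * X 1" using R by blast
lemma YcX: "ok i \<Longrightarrow> 1 < i \<Longrightarrow> Y * X i = X i * Y" using R by blast
lemma Yce: "ok i \<Longrightarrow> 1 < i \<Longrightarrow> Y * e i = e i * Y" using R by blast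
lemma Ye1: "ok 1 \<Longrightarrow> Y * X 1 * Y * e 1 = li * e 1" "ok 1 \<Longrightarrow> e 1 * Y * X 1 * Y = li * e 1"
  using R by blast+
lemma eYe: "ok 1 \<Longrightarrow> m < k \<Longrightarrow> e 1 * Y ^ m * e 1 = \<phi> (A m) * e 1" using R by blast

lemma pc: "\<phi> r * x = x * \<phi> r" using phicomm[OF alg] .
lemma pcR: "x * \<phi> r = \<phi> r * x" using phicomm[OF alg] by simp
lemma pcM: "x * (\<phi> r * y) = \<phi> r * (x * y)" using phicomm[OF alg] by (metis mult.assoc)
lemma p1: "\<phi> 1 = 1" using phi1[OF alg] .
lemma pm: "\<phi> (a*b) = \<phi> a * \<phi> b" using phimult[OF alg] .

lemma lli: "l * li = 1" "li * l = 1"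
  using pm[of lam lami] pm[of lami lam] lam p1 by (simp_all add: mult.commute)

lemma farXe': "ok i \<Longrightarrow> ok j \<Longrightarrow> i + 2 \<le> j \<or> j + 2 \<le> i \<Longrightarrow> Xinv i * e j = e j * Xinv i"
  using inv_comm[OF XX(1) XX(2) farXe] by blast
lemma farX': "ok i \<Longrightarrow> ok j \<Longrightarrow> i + 2 \<le> j \<or> j + 2 \<le> i \<Longrightarrow> Xinv i * X j = X j * Xinv i"
  using inv_comm[OF XX(1) XX(2) farX] by blast
lemma farX'': "ok i \<Longrightarrow> ok j \<Longrightarrow> i + 2 \<le> j \<or> j + 2 \<le> i \<Longrightarrow> Xinv i * Xinv j = Xinv j * Xinv i"
proof -
  assume a: "ok i" "ok j" "i + 2 \<le> j \<or> j + 2 \<le> i"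
  have "X j * Xinv i = Xinv i * X j" using farX'[OF a] by simp
  then show ?thesis using inv_comm[OF XX(1)[OF a(2)] XX(2)[OF a(2)]] by metis
qed

lemma Xinv_eq: "ok i \<Longrightarrow> Xinv i = X i - d + d * e i"
  using Xrel[of i] by (simp add: algebra_simps)
lemma X_eq: "ok i \<Longrightarrow> X i = Xinv i + d - d * e i"
  using Xrel[of i] by (simp add: algebra_simps)

lemma lrel: "l - d * (1 - \<phi> (A 0)) = li"
proof -
  have "\<phi> (lam - lami) = \<phi> ((qp - qi) * (1 - A 0))" using lamrel by simp
  then have "l - li = d * (1 - \<phi> (A 0))" using phidiff[OF alg] pm p1 by simp
  then show ?thesis by (simp add: algebra_simps)
qed

lemma Xinv_e: assumes "ok i" shows "Xinv i * e i = li * e i" "e i * Xinv i = li * e i"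
proof -
  have "Xinv i * e i = X i * e i - d * e i + d * (e i * e i)"
    unfolding Xinv_eq[OF assms] by (simp add: algebra_simps)
  also have "\<dots> = (l - d * (1 - \<phi> (A 0))) * e i"
    using Xe[OF assms] ee[OF assms] by (simp add: algebra_simps)
  finally show "Xinv i * e i = li * e i" using lrel by simp
  have "e i * Xinv i = e i * X i - e i * d + e i * (d * e i)"
    unfolding Xinv_eq[OF assms] by (simp add: algebra_simps)
  also have "\<dots> = e i * X i - d * e i + d * (e i * e i)"
    by (simp only: pcR pcM)
  also have "\<dots> = (l - d * (1 - \<phi> (A 0))) * e i"
    using Xe[OF assms] ee[OF assms] by (simp add: algebra_simps)
  finally show "e i * Xinv i = li * e i" using lrel by simp
qed

end



lemma comm3: "a*w = w*a \<Longrightarrow> z*w = w*(z::'a::semigroup_mult) \<Longrightarrow> (a*z*a)*w = w*(a*z*a)"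
  by (metis mult.assoc)

context cb begin

lemma XXl: "ok i \<Longrightarrow> X i * (Xinv i * z) = z" "ok i \<Longrightarrow> Xinv i * (X i * z) = z"
  using XX by (simp_all add: mult.assoc[symmetric])

lemma Yinv: "1 \<le> j \<Longrightarrow> j \<le> n \<Longrightarrow> Yj j * Yi j = 1 \<and> Yi j * Yj j = 1"
proof (induction j rule: nat_induct_at_least)
  case base then show ?case using YY by simp
next
  case (Suc j)
  then have okj: "ok j" by auto
  have e1: "Yj (Suc j) = X j * Yj j * X j" "Yi (Suc j) = Xinv j * Yi j * Xinv j"
    using Suc Yp_Suc by auto
  have ih: "Yj j * Yi j = 1" "Yi j * Yj j = 1" using Suc by auto
  have ihl: "Yj j * (Yi j * z) = z" "Yi j * (Yj j * z) = z" for z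
    using ih by (simp_all add: mult.assoc[symmetric])
  show ?case unfolding e1 using XXl[OF okj] XX[OF okj] ihl by (simp add: mult.assoc)
qed

lemma Yinvl: "1 \<le> j \<Longrightarrow> j \<le> n \<Longrightarrow> Yj j * (Yi j * z) = z" "1 \<le> j \<Longrightarrow> j \<le> n \<Longrightarrow> Yi j * (Yj j * z) = z"
  using Yinv by (simp_all add: mult.assoc[symmetric])

lemma YcommX: "1 \<le> j \<Longrightarrow> j < m \<Longrightarrow> m \<le> n - 1 \<Longrightarrow>
   Yj j * X m = X m * Yj j \<and> Yj j * Xinv m = Xinv m * Yj j \<and> Yj j * e m = e m * Yj j"
proof (induction j rule: nat_induct_at_least)
  case base
  then have okm: "ok m" by auto
  have "Y * X m = X m * Y" "Y * e m = e m * Y" using YcX[OF okm] Yce[OF okm] base by auto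
  moreover have "Y * Xinv m = Xinv m * Y" using inv_comm[OF XX[OF okm], of Y] \<open>Y * X m = X m * Y\<close> by simp
  ultimately show ?case by simp
next
  case (Suc j)
  then have okj: "ok j" and okm: "ok m" and far: "j + 2 \<le> m" by auto
  have e1: "Yj (Suc j) = X j * Yj j * X j" using Suc Yp_Suc by auto
  have c1: "X j * X m = X m * X j" "X j * e m = e m * X j" "X j * Xinv m = Xinv m * X j"
    using farX[OF okj okm] farXe[OF okj okm] far farX'[OF okm okj] by auto
  have ih: "Yj j * X m = X m * Yj j" "Yj j * Xinv m = Xinv m * Yj j" "Yj j * e m = e m * Yj j"
    using Suc by auto
  show ?case unfolding e1 using comm3[OF c1(1) ih(1)] comm3[OF c1(2) ih(3)] comm3[OF c1(3) ih(2)] by simp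
qed

lemma YcommX': assumes "1 \<le> j" "j < m" "m \<le> n - 1"
  shows "Yi j * X m = X m * Yi j" "Yi j * Xinv m = Xinv m * Yi j" "Yi j * e m = e m * Yi j"
proof -
  have jn: "j \<le> n" using assms by auto
  have I: "Yj j * Yi j = 1" "Yi j * Yj j = 1" using Yinv[OF assms(1) jn] by auto
  show "Yi j * X m = X m * Yi j" "Yi j * Xinv m = Xinv m * Yi j" "Yi j * e m = e m * Yi j"
    using inv_comm[OF I] YcommX[OF assms] by auto
qed

lemma Ycomm_adj: "1 \<le> j \<Longrightarrow> Suc j \<le> n \<Longrightarrow> Yj j * Yj (Suc j) = Yj (Suc j) * Yj j"
proof (induction j rule: nat_induct_at_least)
  case base
  then have "ok 1" by auto
  then have "X 1 * Y * X 1 * Y = Y * X 1 * Y * X 1" by (rule YX1)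
  then show ?case by (simp add: mult.assoc)
next
  case (Suc j)
  then have okj: "ok j" and okj1: "ok (Suc j)" by auto
  define a where "a = X j"
  define b where "b = X (Suc j)"
  define Z where "Z = Yj j"
  have e1: "Yj (Suc j) = a * Z * a" unfolding a_def Z_def using Suc Yp_Suc by auto
  have e2: "Yj (Suc (Suc j)) = b * (a * Z * a) * b" unfolding b_def using e1 Yp_Suc[of "Suc j"] by simp
  have br: "a * (b * (a * x)) = b * (a * (b * x))" for x
    using braid[OF okj] okj1 unfolding a_def b_def by (simp add: lift mult.assoc[symmetric])
  have Zb: "Z * (b * x) = b * (Z * x)" for x
    using YcommX[of j "Suc j"] Suc unfolding Z_def b_def by (simp add: lift mult.assoc[symmetric])
  have ih: "Z * (a * (Z * (a * x))) = a * (Z * (a * (Z * x)))" for x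
    using Suc e1 unfolding Z_def by (simp add: lift mult.assoc[symmetric])
  have "(a * Z * a) * (b * (a * Z * a) * b) = a * (Z * (a * (b * (a * (Z * (a * b))))))"
    by (simp add: mult.assoc)
  also have "\<dots> = a * (Z * (b * (a * (b * (Z * (a * b))))))" by (simp add: br)
  also have "\<dots> = a * (b * (Z * (a * (Z * (b * (a * b))))))" by (simp add: Zb)
  also have "\<dots> = a * (b * (Z * (a * (Z * (a * (b * a))))))" using br[of 1] by simp
  also have "\<dots> = a * (b * (a * (Z * (a * (Z * (b * a))))))" by (simp add: ih)
  also have "\<dots> = b * (a * (b * (Z * (a * (Z * (b * a))))))" by (simp add: br)
  finally have L: "(a * Z * a) * (b * (a * Z * a) * b) = b * (a * (b * (Z * (a * (Z * (b * a))))))" .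
  have "(b * (a * Z * a) * b) * (a * Z * a) = b * (a * (Z * (a * (b * (a * (Z * a))))))"
    by (simp add: mult.assoc)
  also have "\<dots> = b * (a * (Z * (b * (a * (b * (Z * a))))))" by (simp add: br)
  also have "\<dots> = b * (a * (b * (Z * (a * (Z * (b * a))))))" by (simp add: Zb)
  finally have R: "(b * (a * Z * a) * b) * (a * Z * a) = b * (a * (b * (Z * (a * (Z * (b * a))))))" .
  show ?case unfolding e1 e2 using L R by simp
qed

end



context cb begin

lemma Ycomm_lt0: assumes j1: "1 \<le> j" shows "Suc j \<le> m \<Longrightarrow> m \<le> n \<Longrightarrow> Yj j * Yj m = Yj m * Yj j"
proof (induction m rule: nat_induct_at_least)
  case base then show ?case using Ycomm_adj j1 by simp
next
  case (Suc m)
  have e1: "Yj (Suc m) = X m * Yj m * X m" using Suc j1 Yp_Suc[of m] by auto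
  have c: "Yj j * X m = X m * Yj j" using YcommX[of j m] Suc j1 by auto
  have c2: "Yj m * Yj j = Yj j * Yj m" using Suc by auto
  show ?case unfolding e1 using comm3[OF c[symmetric] c2] by auto
qed

lemma Ycomm_lt: "1 \<le> j \<Longrightarrow> j < m \<Longrightarrow> m \<le> n \<Longrightarrow> Yj j * Yj m = Yj m * Yj j"
  using Ycomm_lt0[of j m] by (simp add: Suc_le_eq)

lemma YYc: assumes "1 \<le> j" "j \<le> n" "1 \<le> m" "m \<le> n"
  shows "Yj j * Yj m = Yj m * Yj j" "Yi j * Yj m = Yj m * Yi j"
        "Yj j * Yi m = Yi m * Yj j" "Yi j * Yi m = Yi m * Yi j"
proof -
  show c: "Yj j * Yj m = Yj m * Yj j"
  proof (cases "j < m")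
    case True then show ?thesis using Ycomm_lt[of j m] assms by blast
  next
    case False
    show ?thesis
    proof (cases "m < j")
      case True then show ?thesis using Ycomm_lt[of m j] assms by metis
    next
      case False then have "j = m" using \<open>\<not> j < m\<close> by simp
      then show ?thesis by simp
    qed
  qed
  have I: "Yj j * Yi j = 1" "Yi j * Yj j = 1" using Yinv assms by auto
  have J: "Yj m * Yi m = 1" "Yi m * Yj m = 1" using Yinv assms by auto
  show c2: "Yi j * Yj m = Yj m * Yi j" using inv_comm[OF I c] .
  show c3: "Yj j * Yi m = Yi m * Yj j" using inv_comm[OF J c[symmetric]] by simp
  show "Yi j * Yi m = Yi m * Yi j" using inv_comm[OF J c2[symmetric]] by simp
qed

lemma Ye_rel: "1 \<le> i \<Longrightarrow> i \<le> n - 1 \<Longrightarrow> Yj i * Yj (Suc i) * e i = e i \<and> e i * Yj i * Yj (Suc i) = e i"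
proof (induction i rule: nat_induct_at_least)
  case base
  then have ok1: "ok 1" by auto
  have e2: "Yj (Suc 1) = X 1 * Y * X 1" by simp
  have a: "Y * (X 1 * Y * X 1) * e 1 = e 1"
  proof -
    have "Y * (X 1 * Y * X 1) * e 1 = Y * X 1 * Y * (X 1 * e 1)" by (simp add: mult.assoc)
    also have "\<dots> = Y * X 1 * Y * (l * e 1)" using Xe[OF ok1] by simp
    also have "\<dots> = l * (Y * X 1 * Y * e 1)" by (simp add: pcR pcM mult.assoc)
    also have "\<dots> = l * (li * e 1)" using Ye1[OF ok1] by simp
    also have "\<dots> = e 1" using lli by (simp add: mult.assoc[symmetric])
    finally show ?thesis .
  qed
  have b: "e 1 * Y * (X 1 * Y * X 1) = e 1"
  proof -
    have "e 1 * Y * (X 1 * Y * X 1) = (e 1 * Y * X 1 * Y) * X 1" by (simp add: mult.assoc)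
    also have "\<dots> = li * (e 1 * X 1)" using Ye1[OF ok1] by (simp add: mult.assoc)
    also have "\<dots> = li * (l * e 1)" using Xe[OF ok1] by simp
    also have "\<dots> = e 1" using lli by (simp add: mult.assoc[symmetric])
    finally show ?thesis .
  qed
  show ?case using a b by simp
next
  case (Suc i)
  then have oki: "ok i" and oki1: "ok (Suc i)" by auto
  define a where "a = X i"
  define b where "b = X (Suc i)"
  define b' where "b' = Xinv (Suc i)"
  define Z where "Z = Yj i"
  define f where "f = e (Suc i)"
  define g where "g = e i"
  have e1: "Yj (Suc i) = a * Z * a" unfolding a_def Z_def using Suc Yp_Suc by auto
  have e2: "Yj (Suc (Suc i)) = b * (a * Z * a) * b" unfolding b_def using e1 Yp_Suc[of "Suc i"] by simp
  have ih: "Z * (a * Z * a) * g = g" "g * Z * (a * Z * a) = g" using Suc.IH oki e1 unfolding Z_def g_def by auto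
  have bf: "b * f = l * f" "f * b = l * f" using Xe[OF oki1] unfolding b_def f_def by auto
  have bb': "b * (b' * x) = x" "b' * (b * x) = x" for x using XXl[OF oki1] unfolding b_def b'_def by auto
  have bab: "a * (b * (a * x)) = b * (a * (b * x))" for x
    using braid[OF oki] oki1 unfolding a_def b_def by (simp add: lift mult.assoc[symmetric])
  have Zb: "Z * (b * x) = b * (Z * x)" "Z * (b' * x) = b' * (Z * x)" for x
    using YcommX[of i "Suc i"] Suc unfolding Z_def b_def b'_def by (simp_all add: lift mult.assoc[symmetric])
  have bae: "b * (a * f) = g * f" using adj1[OF oki1 oki] unfolding a_def b_def f_def g_def by (simp add: mult.assoc)
  have af: "a * f = b' * (g * f)"
  proof -
    have "b' * (b * (a * f)) = b' * (g * f)" using bae by simp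
    then show ?thesis using bb'(2) by simp
  qed
  have abe: "a * (b * g) = f * g" using adj1[OF oki oki1] unfolding a_def b_def f_def g_def by (simp add: mult.assoc)
  have fgf: "f * (g * f) = f" using adj3[OF oki1 oki] unfolding f_def g_def by (simp add: mult.assoc)
  have fg: "f * g = f * (a * b)" using adj2[OF oki oki1] unfolding a_def b_def f_def g_def by (simp add: mult.assoc)
  have fa: "f * a = f * (g * b')"
  proof -
    have "f * (g * b') = f * (a * (b * b'))" using fg by (simp add: mult.assoc[symmetric])
    then show ?thesis using XX[OF oki1] unfolding b_def b'_def by simp
  qed
  have gba: "g * (b * a) = g * f" using adj2[OF oki1 oki] unfolding a_def b_def f_def g_def by (simp add: mult.assoc)
  have ae: "a * g = l * g" using Xe[OF oki] unfolding a_def g_def by simp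
  have ZaZg: "Z * (a * (Z * g)) = li * g"
  proof -
    have "g = Z * (a * (Z * (a * g)))" using ih(1) by (simp add: mult.assoc)
    also have "\<dots> = l * (Z * (a * (Z * g)))" using ae by (simp add: pcM)
    finally have "li * g = li * (l * (Z * (a * (Z * g))))" by simp
    then show ?thesis using lli by (simp add: mult.assoc[symmetric])
  qed
  have ihb: "g * (Z * (a * (Z * (a * x)))) = g * x" for x
    using ih(2) by (simp add: lift mult.assoc[symmetric])
  have A: "(a * Z * a) * (b * (a * Z * a) * b) * f = f"
  proof -
    have "(a * Z * a) * (b * (a * Z * a) * b) * f = a * (Z * (a * (b * (a * (Z * (a * (b * f)))))))"
      by (simp add: mult.assoc)
    also have "\<dots> = l * (a * (Z * (a * (b * (a * (Z * (a * f)))))))" using bf by (simp add: pcM)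
    also have "\<dots> = l * (a * (Z * (a * (b * (a * (b' * (Z * (g * f))))))))" using af Zb by simp
    also have "\<dots> = l * (a * (Z * (b * (a * (Z * (g * f))))))" using bab bb' by simp
    also have "\<dots> = l * (a * (b * (Z * (a * (Z * (g * f))))))" using Zb by simp
    also have "\<dots> = l * (a * (b * (li * g * f)))" using ZaZg by (simp add: mult.assoc[symmetric])
    also have "\<dots> = l * (li * (a * (b * (g * f))))"
    proof -
      have "a * (b * (li * g * f)) = li * (a * (b * (g * f)))" by (simp add: pcM mult.assoc)
      then show ?thesis by simp
    qed
    also have "\<dots> = f" using lli abe fgf by (simp add: mult.assoc[symmetric])
    finally show ?thesis .
  qed
  have B: "f * (a * Z * a) * (b * (a * Z * a) * b) = f"
  proof -
    have "f * (a * Z * a) * (b * (a * Z * a) * b) = f * (a * (Z * (a * (b * (a * (Z * (a * b)))))))"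
      by (simp add: mult.assoc)
    also have "\<dots> = f * (g * (b' * (Z * (a * (b * (a * (Z * (a * b))))))))"
      using fa by (simp add: mult.assoc[symmetric])
    also have "\<dots> = f * (g * (Z * (b' * (a * (b * (a * (Z * (a * b))))))))" using Zb by simp
    also have "\<dots> = f * (g * (Z * (a * (b * (Z * (a * b))))))" using bab bb' by simp
    also have "\<dots> = f * (g * (Z * (a * (Z * (b * (a * b))))))" using Zb by simp
    also have "\<dots> = f * (g * (Z * (a * (Z * (a * (b * a))))))" using bab[of 1] by simp
    also have "\<dots> = f * (g * (b * a))" using ihb by simp
    also have "\<dots> = f" using gba fgf by simp
    finally show ?thesis .
  qed
  show ?case unfolding e1 e2 using A B unfolding f_def by simp
qed

end



lemma zpow_shift_l:
  fixes u u' w w' x :: "'a::ring_1"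
  assumes uu: "u*u' = 1" "u'*u = 1" and ww: "w*w' = 1" "w'*w = 1" and c: "u*w = w*u"
    and h1: "u*x = w'*x" and h2: "u'*x = w*x"
  shows "zpow u u' t * x = zpow w w' (-t) * x"
proof -
  have c1: "u*w' = w'*u" using inv_comm[OF ww(1) ww(2) c[symmetric]] by simp
  have c2: "u'*w' = w'*u'" using inv_comm[OF uu c1] by simp
  have c3: "u'*w = w*u'" using inv_comm[OF uu c] .
  have z1: "zpow u u' t * w' = w' * zpow u u' t" for t using zpow_comm[OF c1 c2] .
  have z2: "zpow u u' t * w = w * zpow u u' t" for t using zpow_comm[OF c c3] .
  show ?thesis
  proof (induction t rule: int_induct[where k=0])
    case base then show ?case by simp
  next
    case (step1 t)
    have "zpow u u' (t+1) * x = zpow u u' t * (u * x)" using zpow_succ'[OF uu] by (simp add: mult.assoc)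
    also have "\<dots> = w' * (zpow u u' t * x)" using h1 z1 by (metis mult.assoc)
    also have "\<dots> = w' * zpow w w' (-t) * x" using step1 by (simp add: mult.assoc)
    also have "\<dots> = zpow w w' (-t - 1) * x" using zpow_pred[OF ww, of "-t"] by simp
    finally show ?case by simp
  next
    case (step2 t)
    have "zpow u u' (t-1) * x = zpow u u' t * (u' * x)" using zpow_pred'[OF uu] by (simp add: mult.assoc)
    also have "\<dots> = w * (zpow u u' t * x)" using h2 z2 by (metis mult.assoc)
    also have "\<dots> = w * zpow w w' (-t) * x" using step2 by (simp add: mult.assoc)
    also have "\<dots> = zpow w w' (-t + 1) * x" using zpow_succ[OF ww, of "-t"] by simp
    finally show ?case by simp
  qed
qed

lemma zpow_shift_r:
  fixes u u' w w' x :: "'a::ring_1"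
  assumes uu: "u*u' = 1" "u'*u = 1" and ww: "w*w' = 1" "w'*w = 1" and c: "u*w = w*u"
    and h1: "x*u = x*w'" and h2: "x*u' = x*w"
  shows "x * zpow u u' t = x * zpow w w' (-t)"
proof -
  have c1: "u*w' = w'*u" using inv_comm[OF ww(1) ww(2) c[symmetric]] by simp
  have c2: "u'*w' = w'*u'" using inv_comm[OF uu c1] by simp
  have c3: "u'*w = w*u'" using inv_comm[OF uu c] .
  have z1: "zpow u u' t * w' = w' * zpow u u' t" for t using zpow_comm[OF c1 c2] .
  have z2: "zpow u u' t * w = w * zpow u u' t" for t using zpow_comm[OF c c3] .
  show ?thesis
  proof (induction t rule: int_induct[where k=0])
    case base then show ?case by simp
  next
    case (step1 t)
    have "x * zpow u u' (t+1) = (x * u) * zpow u u' t" using zpow_succ[OF uu] by (simp add: mult.assoc)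
    also have "\<dots> = (x * zpow u u' t) * w'" using h1 z1 by (metis mult.assoc)
    also have "\<dots> = x * (zpow w w' (-t) * w')" using step1 by (simp add: mult.assoc)
    also have "\<dots> = x * zpow w w' (-t - 1)" using zpow_pred'[OF ww, of "-t"] by simp
    finally show ?case by simp
  next
    case (step2 t)
    have "x * zpow u u' (t-1) = (x * u') * zpow u u' t" using zpow_pred[OF uu] by (simp add: mult.assoc)
    also have "\<dots> = (x * zpow u u' t) * w" using h2 z2 by (metis mult.assoc)
    also have "\<dots> = x * (zpow w w' (-t) * w)" using step2 by (simp add: mult.assoc)
    also have "\<dots> = x * zpow w w' (-t + 1)" using zpow_succ'[OF ww, of "-t"] by simp
    finally show ?case by simp
  qed
qed

context cb begin

abbreviation "Zp j t \<equiv> zpow (Yj j) (Yi j) t"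
abbreviation "Ym s m \<equiv> Ymon Y Yinv X Xinv s m"

lemma Yeq: assumes "ok i"
  shows "Yj (Suc i) * e i = Yi i * e i" "e i * Yj (Suc i) = e i * Yi i"
        "Yi (Suc i) * e i = Yj i * e i" "e i * Yi (Suc i) = e i * Yj i"
proof -
  have i1: "1 \<le> i" "i \<le> n" "1 \<le> Suc i" "Suc i \<le> n" using assms by auto
  have R: "Yj i * Yj (Suc i) * e i = e i" "e i * Yj i * Yj (Suc i) = e i" using Ye_rel assms by auto
  have I: "Yj i * Yi i = 1" "Yi i * Yj i = 1" using Yinv i1 by auto
  have J: "Yj (Suc i) * Yi (Suc i) = 1" "Yi (Suc i) * Yj (Suc i) = 1" using Yinv i1 by auto
  have C: "Yj i * Yj (Suc i) = Yj (Suc i) * Yj i" using YYc i1 by auto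
  have "Yi i * (Yj i * Yj (Suc i) * e i) = Yi i * e i" using R by simp
  then show "Yj (Suc i) * e i = Yi i * e i" using I by (simp add: mult.assoc[symmetric])
  have "e i * Yj (Suc i) * Yj i * Yi i = e i * Yi i" using R C by (simp add: mult.assoc)
  then show "e i * Yj (Suc i) = e i * Yi i" using I by (simp add: mult.assoc)
  have "Yi (Suc i) * (Yj (Suc i) * Yj i * e i) = Yi (Suc i) * e i" using R C by (simp add: mult.assoc)
  then show "Yi (Suc i) * e i = Yj i * e i" using J by (simp add: mult.assoc[symmetric])
  have "e i * Yj i * Yj (Suc i) * Yi (Suc i) = e i * Yi (Suc i)" using R by simp
  then show "e i * Yi (Suc i) = e i * Yj i" using J by (simp add: mult.assoc)
qed

lemma Zp_shift: assumes "ok i"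
  shows "Zp (Suc i) t * e i = Zp i (-t) * e i" "e i * Zp (Suc i) t = e i * Zp i (-t)"
proof -
  have i1: "1 \<le> i" "i \<le> n" "1 \<le> Suc i" "Suc i \<le> n" using assms by auto
  have I: "Yj i * Yi i = 1" "Yi i * Yj i = 1" using Yinv i1 by auto
  have J: "Yj (Suc i) * Yi (Suc i) = 1" "Yi (Suc i) * Yj (Suc i) = 1" using Yinv i1 by auto
  have C: "Yj (Suc i) * Yj i = Yj i * Yj (Suc i)" using YYc i1 by auto
  show "Zp (Suc i) t * e i = Zp i (-t) * e i" using zpow_shift_l[OF J I C] Yeq[OF assms] by auto
  show "e i * Zp (Suc i) t = e i * Zp i (-t)" using zpow_shift_r[OF J I C] Yeq[OF assms] by auto
qed

lemma Ym_0[simp]: "Ym s 0 = 1" by (simp add: Ymon_def)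
lemma Ym_Suc: "Ym s (Suc m) = Ym s m * Zp (Suc m) (s (Suc m))"
  by (simp add: Ymon_def)

lemma Ym_cong: "(\<And>j. 1 \<le> j \<Longrightarrow> j \<le> m \<Longrightarrow> s j = s' j) \<Longrightarrow> Ym s m = Ym s' m"
  by (induction m) (simp_all add: Ym_Suc)

lemma Ym_zero: "Ym (\<lambda>_. 0) m = 1"
  by (induction m) (simp_all add: Ym_Suc)

lemma Zp_inv: "1 \<le> j \<Longrightarrow> j \<le> n \<Longrightarrow> Yj j * Yi j = 1" "1 \<le> j \<Longrightarrow> j \<le> n \<Longrightarrow> Yi j * Yj j = 1"
  using Yinv by auto

lemma Ym_comm: "(\<And>j. 1 \<le> j \<Longrightarrow> j \<le> m \<Longrightarrow> Yj j * w = w * Yj j \<and> Yi j * w = w * Yi j)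
   \<Longrightarrow> Ym s m * w = w * Ym s m"
proof (induction m)
  case 0 then show ?case by simp
next
  case (Suc m)
  have a: "Ym s m * w = w * Ym s m" using Suc by auto
  have b: "Zp (Suc m) t * w = w * Zp (Suc m) t" for t using Suc.prems[of "Suc m"] zpow_comm by auto
  show ?case unfolding Ym_Suc using a b by (metis mult.assoc)
qed

lemma Zp_add: "1 \<le> j \<Longrightarrow> j \<le> n \<Longrightarrow> Zp j a * Zp j b = Zp j (a + b)"
  using zpow_add[OF Zp_inv] by auto

lemma Zp_comm: assumes "1 \<le> j" "j \<le> n" "1 \<le> m" "m \<le> n" shows "Zp j a * Zp m b = Zp m b * Zp j a"
proof -
  have "Yj j * Zp m b = Zp m b * Yj j" "Yi j * Zp m b = Zp m b * Yi j"
    using zpow_comm[of "Yj m" "Yj j" "Yi m"] zpow_comm[of "Yj m" "Yi j" "Yi m"] YYc[OF assms] by auto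
  then show ?thesis using zpow_comm[of "Yj j" "Zp m b" "Yi j"] by auto
qed

lemma Zp_comm_Y: assumes "1 \<le> j" "j \<le> n" "1 \<le> m" "m \<le> n"
  shows "Yj m * Zp j t = Zp j t * Yj m" "Yi m * Zp j t = Zp j t * Yi m"
proof -
  show "Yj m * Zp j t = Zp j t * Yj m" using zpow_comm[of "Yj j" "Yj m" "Yi j" t] YYc[OF assms] by simp
  show "Yi m * Zp j t = Zp j t * Yi m" using zpow_comm[of "Yj j" "Yi m" "Yi j" t] YYc[OF assms] by simp
qed

lemma Ym_comm_Zp: "m \<le> n \<Longrightarrow> 1 \<le> j \<Longrightarrow> j \<le> n \<Longrightarrow> Ym s m * Zp j t = Zp j t * Ym s m"
  by (rule Ym_comm) (simp add: Zp_comm_Y)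

lemma Ym_mult_Zp: "1 \<le> j \<Longrightarrow> j \<le> m \<Longrightarrow> m \<le> n \<Longrightarrow> Ym s m * Zp j t = Ym (s(j := s j + t)) m"
proof (induction m)
  case 0 then show ?case by simp
next
  case (Suc m)
  show ?case
  proof (cases "j = Suc m")
    case True
    have "Ym s (Suc m) * Zp j t = Ym s m * (Zp j (s j) * Zp j t)" unfolding Ym_Suc True by (simp add: mult.assoc)
    also have "\<dots> = Ym s m * Zp j (s j + t)" using Zp_add Suc.prems by simp
    also have "Ym s m = Ym (s(j := s j + t)) m" using True by (intro Ym_cong) auto
    finally show ?thesis unfolding Ym_Suc using True by simp
  next
    case False
    then have jm: "j \<le> m" using Suc.prems by simp
    have "Ym s (Suc m) * Zp j t = Ym s m * (Zp (Suc m) (s (Suc m)) * Zp j t)" unfolding Ym_Suc by (simp add: mult.assoc)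
    also have "\<dots> = (Ym s m * Zp j t) * Zp (Suc m) (s (Suc m))"
      using Zp_comm[of "Suc m" j] Suc.prems by (simp add: mult.assoc)
    also have "\<dots> = Ym (s(j := s j + t)) m * Zp (Suc m) (s (Suc m))"
    proof -
      have mn: "m \<le> n" using Suc.prems by simp
      show ?thesis by (simp only: Suc.IH[OF Suc.prems(1) jm mn])
    qed
    finally have L: "Ym s (Suc m) * Zp j t = Ym (s(j := s j + t)) m * Zp (Suc m) (s (Suc m))" .
    have "Ym (s(j := s j + t)) (Suc m) = Ym (s(j := s j + t)) m * Zp (Suc m) (s (Suc m))"
      unfolding Ym_Suc using False by simp
    then show ?thesis using L by (simp add: fun_upd_def)
  qed
qed

lemma Ym_mult: "m \<le> n \<Longrightarrow> Ym s m * Ym s' m = Ym (\<lambda>j. s j + s' j) m"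
proof (induction m)
  case 0 then show ?case by simp
next
  case (Suc m)
  have "Ym s (Suc m) * Ym s' (Suc m) = Ym s m * (Zp (Suc m) (s (Suc m)) * Ym s' m) * Zp (Suc m) (s' (Suc m))"
    unfolding Ym_Suc by (simp add: mult.assoc)
  also have "\<dots> = (Ym s m * Ym s' m) * (Zp (Suc m) (s (Suc m)) * Zp (Suc m) (s' (Suc m)))"
    using lift[OF Ym_comm_Zp[of m "Suc m" s' "s (Suc m)", symmetric]] Suc.prems by (simp add: mult.assoc)
  also have "\<dots> = Ym (\<lambda>j. s j + s' j) m * Zp (Suc m) (s (Suc m) + s' (Suc m))"
    using Suc Zp_add[of "Suc m"] by simp
  finally show ?case unfolding Ym_Suc by simp
qed

end



context cb begin

definition "T1 i = {Ym s (i - 1) * e i | s. True}"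
definition "T2 i N = {Ym s i * e i | s. \<bar>s i\<bar> \<le> N}"
definition "T3 i N = {e i * Ym s i | s. \<bar>s i\<bar> \<le> N}"

lemma sp_add: "x \<in> sp S \<Longrightarrow> y \<in> sp S \<Longrightarrow> x + y \<in> sp S" using rspan_add[OF alg] .
lemma sp_diff: "x \<in> sp S \<Longrightarrow> y \<in> sp S \<Longrightarrow> x - y \<in> sp S" using rspan_diff[OF alg] .
lemma sp_smult: "x \<in> sp S \<Longrightarrow> \<phi> r * x \<in> sp S" using rspan_smult[OF alg] .
lemma sp_base: "x \<in> S \<Longrightarrow> x \<in> sp S" using rspan_base[OF alg] .
lemma sp_0: "0 \<in> sp S" using rspan_0[OF alg] .
lemma sp_lmult: "x \<in> sp S \<Longrightarrow> (\<And>g. g \<in> S \<Longrightarrow> u * g \<in> sp T) \<Longrightarrow> u * x \<in> sp T"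
  using rspan_lmult[OF alg] .
lemma sp_rmult: "x \<in> sp S \<Longrightarrow> (\<And>g. g \<in> S \<Longrightarrow> g * u \<in> sp T) \<Longrightarrow> x * u \<in> sp T"
  using rspan_rmult[OF alg] .
lemma sp_span: "x \<in> sp S \<Longrightarrow> (\<And>g. g \<in> S \<Longrightarrow> g \<in> sp T) \<Longrightarrow> x \<in> sp T"
  using rspan_span[OF alg] .
lemma sp_mono: "x \<in> sp S \<Longrightarrow> S \<subseteq> T \<Longrightarrow> x \<in> sp T"
  using rspan_mono[OF alg] .

lemma Xinv_exp_l: "ok i \<Longrightarrow> Xinv i * w = X i * w - d * w + d * (e i * w)"
  unfolding Xinv_eq by (simp add: algebra_simps)
lemma Xinv_exp_r: "ok i \<Longrightarrow> w * Xinv i = w * X i - d * w + d * (w * e i)"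
  unfolding Xinv_eq by (simp add: algebra_simps pcR pcM)
lemma X_exp_l: "ok i \<Longrightarrow> X i * w = Xinv i * w + d * w - d * (e i * w)"
  unfolding Xinv_eq by (simp add: algebra_simps)
lemma X_exp_r: "ok i \<Longrightarrow> w * X i = w * Xinv i + d * w - d * (w * e i)"
  unfolding Xinv_eq by (simp add: algebra_simps pcR pcM)

lemma Ym_split: "ok i \<Longrightarrow> Ym s i = Ym s (i - 1) * Zp i (s i)"
  using Ym_Suc[of s "i - 1"] by simp

lemma Ym_low_comm: assumes "ok i"
  shows "Ym s (i - 1) * e i = e i * Ym s (i - 1)" "Ym s (i - 1) * X i = X i * Ym s (i - 1)"
        "Ym s (i - 1) * Xinv i = Xinv i * Ym s (i - 1)"
proof -
  have h: "Yj j * w = w * Yj j \<and> Yi j * w = w * Yi j" if "1 \<le> j" "j \<le> i - 1" "w \<in> {e i, X i, Xinv i}" for j w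
    using YcommX[of j i] YcommX'[of j i] that assms by auto
  show "Ym s (i - 1) * e i = e i * Ym s (i - 1)" by (rule Ym_comm) (use h in auto)
  show "Ym s (i - 1) * X i = X i * Ym s (i - 1)" by (rule Ym_comm) (use h in auto)
  show "Ym s (i - 1) * Xinv i = Xinv i * Ym s (i - 1)" by (rule Ym_comm) (use h in auto)
qed

lemma Ym_upd_low: "ok i \<Longrightarrow> Ym (s(i := x)) (i - 1) = Ym s (i - 1)"
  by (rule Ym_cong) auto

lemma Ym_single: "ok i \<Longrightarrow> Ym ((\<lambda>_. 0)(i := t)) i = Zp i t"
  using Ym_split[of i "(\<lambda>_. 0)(i := t)"] Ym_upd_low[of i "\<lambda>_. 0" t] Ym_zero by simp

lemma T1_T2: assumes "ok i" "0 \<le> N" shows "T1 i \<subseteq> T2 i N"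
proof
  fix x assume "x \<in> T1 i"
  then obtain s where x: "x = Ym s (i - 1) * e i" unfolding T1_def by auto
  have "Ym (s(i := 0)) i = Ym s (i - 1)"
    using Ym_split[OF assms(1), of "s(i := 0)"] Ym_upd_low[OF assms(1), of s 0] by simp
  then show "x \<in> T2 i N" unfolding T2_def x using assms(2) by (auto intro!: exI[of _ "s(i := 0)"])
qed

lemma T1_T3: assumes "ok i" "0 \<le> N" shows "T1 i \<subseteq> T3 i N"
proof
  fix x assume "x \<in> T1 i"
  then obtain s where x: "x = Ym s (i - 1) * e i" unfolding T1_def by auto
  have "Ym (s(i := 0)) i = Ym s (i - 1)"
    using Ym_split[OF assms(1), of "s(i := 0)"] Ym_upd_low[OF assms(1), of s 0] by simp
  moreover have "x = e i * Ym s (i - 1)" using x Ym_low_comm[OF assms(1)] by simp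
  ultimately show "x \<in> T3 i N" unfolding T3_def using assms(2) by (auto intro!: exI[of _ "s(i := 0)"])
qed

lemma Zp_T2: assumes "ok i" "\<bar>t\<bar> \<le> N" shows "Zp i t * e i \<in> T2 i N"
proof -
  have "Ym ((\<lambda>_. 0)(i := t)) i = Zp i t" using Ym_single[OF assms(1)] .
  then show ?thesis unfolding T2_def using assms(2) by (auto intro!: exI[of _ "(\<lambda>_. 0)(i := t)"])
qed

lemma Zp_T3: assumes "ok i" "\<bar>t\<bar> \<le> N" shows "e i * Zp i t \<in> T3 i N"
proof -
  have "Ym ((\<lambda>_. 0)(i := t)) i = Zp i t" using Ym_single[OF assms(1)] .
  then show ?thesis unfolding T3_def using assms(2) by (auto intro!: exI[of _ "(\<lambda>_. 0)(i := t)"])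
qed

lemma Ym_comm_Ysuc: assumes "ok i"
  shows "Ym s i * Yj (Suc i) = Yj (Suc i) * Ym s i" "Ym s i * Yi (Suc i) = Yi (Suc i) * Ym s i"
proof -
  have h: "Yj j * w = w * Yj j \<and> Yi j * w = w * Yi j" if "1 \<le> j" "j \<le> i" "w \<in> {Yj (Suc i), Yi (Suc i)}" for j w
    using YYc[of j "Suc i"] that assms by auto
  show "Ym s i * Yj (Suc i) = Yj (Suc i) * Ym s i" by (rule Ym_comm) (use h in auto)
  show "Ym s i * Yi (Suc i) = Yi (Suc i) * Ym s i" by (rule Ym_comm) (use h in auto)
qed

lemma H3: assumes "ok i" "x \<in> sp (T2 i N)"
  shows "Yj (Suc i) * x \<in> sp (T2 i (N+1))" "Yi (Suc i) * x \<in> sp (T2 i (N+1))"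
proof -
  have iN: "i \<le> n" using assms by auto
  show "Yj (Suc i) * x \<in> sp (T2 i (N+1))"
  proof (rule sp_lmult[OF assms(2)])
    fix g assume "g \<in> T2 i N"
    then obtain s where g: "g = Ym s i * e i" "\<bar>s i\<bar> \<le> N" unfolding T2_def by auto
    have "Yj (Suc i) * g = Ym s i * (Yj (Suc i) * e i)" using lift[OF Ym_comm_Ysuc(1)[OF assms(1), symmetric]] g by (simp add: mult.assoc)
    also have "\<dots> = Ym s i * Zp i (-1) * e i" using Yeq(1)[OF assms(1)] by (simp add: zpow_m1 mult.assoc)
    also have "\<dots> = Ym (s(i := s i + -1)) i * e i" using Ym_mult_Zp[of i i s "-1"] assms iN by simp
    finally show "Yj (Suc i) * g \<in> sp (T2 i (N+1))" unfolding T2_def using g(2)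
      by (intro sp_base) (auto intro!: exI[of _ "s(i := s i + -1)"])
  qed
  show "Yi (Suc i) * x \<in> sp (T2 i (N+1))"
  proof (rule sp_lmult[OF assms(2)])
    fix g assume "g \<in> T2 i N"
    then obtain s where g: "g = Ym s i * e i" "\<bar>s i\<bar> \<le> N" unfolding T2_def by auto
    have "Yi (Suc i) * g = Ym s i * (Yi (Suc i) * e i)" using lift[OF Ym_comm_Ysuc(2)[OF assms(1), symmetric]] g by (simp add: mult.assoc)
    also have "\<dots> = Ym s i * Zp i 1 * e i" using Yeq(3)[OF assms(1)] by (simp add: zpow_1 mult.assoc)
    also have "\<dots> = Ym (s(i := s i + 1)) i * e i" using Ym_mult_Zp[of i i s 1] assms iN by simp
    finally show "Yi (Suc i) * g \<in> sp (T2 i (N+1))" unfolding T2_def using g(2)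
      by (intro sp_base) (auto intro!: exI[of _ "s(i := s i + 1)"])
  qed
qed

lemma H3': assumes "ok i" "x \<in> sp (T3 i N)"
  shows "x * Yj (Suc i) \<in> sp (T3 i (N+1))" "x * Yi (Suc i) \<in> sp (T3 i (N+1))"
proof -
  have iN: "i \<le> n" using assms by auto
  show "x * Yj (Suc i) \<in> sp (T3 i (N+1))"
  proof (rule sp_rmult[OF assms(2)])
    fix g assume "g \<in> T3 i N"
    then obtain s where g: "g = e i * Ym s i" "\<bar>s i\<bar> \<le> N" unfolding T3_def by auto
    have "g * Yj (Suc i) = (e i * Yj (Suc i)) * Ym s i" using Ym_comm_Ysuc(1)[OF assms(1)] g by (simp add: mult.assoc)
    also have "\<dots> = e i * (Ym s i * Zp i (-1))"
      using Yeq(2)[OF assms(1)] Ym_comm_Zp[of i i s "-1"] iN assms by (simp add: zpow_m1 mult.assoc)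
    also have "\<dots> = e i * Ym (s(i := s i + -1)) i" using Ym_mult_Zp[of i i s "-1"] assms iN by simp
    finally show "g * Yj (Suc i) \<in> sp (T3 i (N+1))" unfolding T3_def using g(2)
      by (intro sp_base) (auto intro!: exI[of _ "s(i := s i + -1)"])
  qed
  show "x * Yi (Suc i) \<in> sp (T3 i (N+1))"
  proof (rule sp_rmult[OF assms(2)])
    fix g assume "g \<in> T3 i N"
    then obtain s where g: "g = e i * Ym s i" "\<bar>s i\<bar> \<le> N" unfolding T3_def by auto
    have "g * Yi (Suc i) = (e i * Yi (Suc i)) * Ym s i" using Ym_comm_Ysuc(2)[OF assms(1)] g by (simp add: mult.assoc)
    also have "\<dots> = e i * (Ym s i * Zp i 1)"
      using Yeq(4)[OF assms(1)] Ym_comm_Zp[of i i s 1] iN assms by (simp add: zpow_1 mult.assoc)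
    also have "\<dots> = e i * Ym (s(i := s i + 1)) i" using Ym_mult_Zp[of i i s 1] assms iN by simp
    finally show "g * Yi (Suc i) \<in> sp (T3 i (N+1))" unfolding T3_def using g(2)
      by (intro sp_base) (auto intro!: exI[of _ "s(i := s i + 1)"])
  qed
qed

lemma T2_mono: "N \<le> N' \<Longrightarrow> T2 i N \<subseteq> T2 i N'" unfolding T2_def by auto
lemma T3_mono: "N \<le> N' \<Longrightarrow> T3 i N \<subseteq> T3 i N'" unfolding T3_def by auto

end



context cb begin

lemma XYrel: assumes "ok i"
  shows "X i * Yj i = Yj (Suc i) * Xinv i" "Xinv i * Yi i = Yi (Suc i) * X i"
        "Yj i * X i = Xinv i * Yj (Suc i)" "Yi i * Xinv i = X i * Yi (Suc i)"
proof -
  have i1: "1 \<le> i" using assms by simp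
  have a: "Yj (Suc i) = X i * Yj i * X i" "Yi (Suc i) = Xinv i * Yi i * Xinv i"
    using Yp_Suc[OF i1] Yp_Suc[OF i1, of Yinv Xinv] by auto
  show "X i * Yj i = Yj (Suc i) * Xinv i" unfolding a using XX[OF assms] by (simp add: mult.assoc)
  show "Xinv i * Yi i = Yi (Suc i) * X i" unfolding a using XX[OF assms] by (simp add: mult.assoc)
  show "Yj i * X i = Xinv i * Yj (Suc i)" unfolding a using XXl[OF assms] by (simp add: mult.assoc)
  show "Yi i * Xinv i = X i * Yi (Suc i)" unfolding a using XXl[OF assms] by (simp add: mult.assoc)
qed

lemma II_pos: assumes oki: "ok i"
  shows "(\<forall>t. \<bar>t\<bar> \<le> int N \<longrightarrow> e i * Zp i t * e i \<in> sp (T1 i)) \<Longrightarrow>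
         X i * Zp i (int N) * e i \<in> sp (T2 i (int N))"
proof (induction N)
  case 0
  have "e i \<in> T2 i 0" using Zp_T2[OF oki, of 0 0] by simp
  then have "l * e i \<in> sp (T2 i 0)" by (intro sp_smult sp_base)
  then show ?case using Xe[OF oki] by simp
next
  case (Suc N)
  define p where "p = int N"
  have p0: "0 \<le> p" unfolding p_def by simp
  have iN: "1 \<le> i" "i \<le> n" "1 \<le> Suc i" "Suc i \<le> n" using oki by auto
  have IH: "X i * Zp i p * e i \<in> sp (T2 i p)" using Suc p_def by auto
  have EI: "e i * Zp i p * e i \<in> sp (T1 i)" using Suc.prems p_def by auto
  have z: "Zp i (p+1) = Yj i * Zp i p" using zpow_succ[OF Zp_inv[OF iN(1,2)]] .
  have "X i * Zp i (p+1) * e i = Yj (Suc i) * (Xinv i * (Zp i p * e i))"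
    unfolding z using lift[OF XYrel(1)[OF oki]] by (simp add: mult.assoc)
  also have "\<dots> = Yj (Suc i) * (X i * Zp i p * e i) - d * (Yj (Suc i) * (Zp i p * e i))
      + d * (Yj (Suc i) * (e i * Zp i p * e i))"
    unfolding Xinv_exp_l[OF oki] by (simp add: algebra_simps pcM)
  finally have eq: "X i * Zp i (p+1) * e i = \<dots>" .
  have A: "Yj (Suc i) * (X i * Zp i p * e i) \<in> sp (T2 i (p+1))" using H3(1)[OF oki IH] .
  have "Yj (Suc i) * (Zp i p * e i) = Zp i p * (Yi i * e i)"
    using Zp_comm_Y(1)[OF iN(1,2,3,4), of p] Yeq(1)[OF oki] by (metis mult.assoc)
  also have "\<dots> = Zp i (p - 1) * e i" using zpow_pred'[OF Zp_inv[OF iN(1,2)], of p] by (simp add: mult.assoc)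
  finally have B: "Yj (Suc i) * (Zp i p * e i) \<in> sp (T2 i (p+1))"
    using Zp_T2[OF oki, of "p - 1" "p+1"] p0 by (auto intro: sp_base)
  have "e i * Zp i p * e i \<in> sp (T2 i 0)" using sp_mono[OF EI T1_T2[OF oki]] by simp
  then have "Yj (Suc i) * (e i * Zp i p * e i) \<in> sp (T2 i (0+1))" by (rule H3(1)[OF oki])
  then have C: "Yj (Suc i) * (e i * Zp i p * e i) \<in> sp (T2 i (p+1))"
    by (rule sp_mono) (rule T2_mono, use p0 in simp)
  have "X i * Zp i (p+1) * e i \<in> sp (T2 i (p+1))" unfolding eq
    by (intro sp_add sp_diff sp_smult A B C)
  moreover have h: "int (Suc N) = p + 1" unfolding p_def by simp
  ultimately show ?case unfolding h by simp
qed

lemma II_neg: assumes oki: "ok i"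
  shows "(\<forall>t. \<bar>t\<bar> \<le> int N \<longrightarrow> e i * Zp i t * e i \<in> sp (T1 i)) \<Longrightarrow>
         X i * Zp i (- int N) * e i \<in> sp (T2 i (int N))"
proof (induction N)
  case 0
  have "e i \<in> T2 i 0" using Zp_T2[OF oki, of 0 0] by simp
  then have "l * e i \<in> sp (T2 i 0)" by (intro sp_smult sp_base)
  then show ?case using Xe[OF oki] by simp
next
  case (Suc N)
  define p where "p = - int N"
  have p0: "p \<le> 0" unfolding p_def by simp
  have iN: "1 \<le> i" "i \<le> n" "1 \<le> Suc i" "Suc i \<le> n" using oki by auto
  have IH: "X i * Zp i p * e i \<in> sp (T2 i (- p))" using Suc p_def by auto
  have EI: "e i * Zp i (p - 1) * e i \<in> sp (T1 i)" using Suc.prems p_def by auto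
  have z: "Zp i (p - 1) = Yi i * Zp i p" using zpow_pred[OF Zp_inv[OF iN(1,2)]] .
  have "X i * Zp i (p - 1) * e i = Xinv i * (Zp i (p - 1) * e i) + d * (Zp i (p - 1) * e i)
      - d * (e i * Zp i (p - 1) * e i)"
    unfolding X_exp_l[OF oki, of "Zp i (p - 1) * e i"] mult.assoc by simp
  also have "Xinv i * (Zp i (p - 1) * e i) = Yi (Suc i) * (X i * Zp i p * e i)"
    unfolding z using lift[OF XYrel(2)[OF oki]] by (simp add: mult.assoc)
  finally have eq: "X i * Zp i (p - 1) * e i = Yi (Suc i) * (X i * Zp i p * e i) + d * (Zp i (p - 1) * e i)
      - d * (e i * Zp i (p - 1) * e i)" .
  have A: "Yi (Suc i) * (X i * Zp i p * e i) \<in> sp (T2 i (- p + 1))" using H3(2)[OF oki IH] .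
  have B: "Zp i (p - 1) * e i \<in> sp (T2 i (- p + 1))"
    using Zp_T2[OF oki, of "p - 1" "-p+1"] p0 by (auto intro: sp_base)
  have C: "e i * Zp i (p - 1) * e i \<in> sp (T2 i (- p + 1))"
    using sp_mono[OF EI T1_T2[OF oki]] p0 by simp
  have "X i * Zp i (p - 1) * e i \<in> sp (T2 i (- p + 1))" unfolding eq
    by (intro sp_add sp_diff sp_smult A B C)
  moreover have h1: "- int (Suc N) = p - 1" and h2: "int (Suc N) = - p + 1" unfolding p_def by simp_all
  ultimately show ?case unfolding h1 h2 by simp
qed

lemma III_pos: assumes oki: "ok i"
  shows "(\<forall>t. \<bar>t\<bar> \<le> int N \<longrightarrow> e i * Zp i t * e i \<in> sp (T1 i)) \<Longrightarrow>
         e i * Zp i (int N) * X i \<in> sp (T3 i (int N))"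
proof (induction N)
  case 0
  have "e i \<in> T3 i 0" using Zp_T3[OF oki, of 0 0] by simp
  then have "l * e i \<in> sp (T3 i 0)" by (intro sp_smult sp_base)
  then show ?case using Xe[OF oki] by simp
next
  case (Suc N)
  define p where "p = int N"
  have p0: "0 \<le> p" unfolding p_def by simp
  have iN: "1 \<le> i" "i \<le> n" "1 \<le> Suc i" "Suc i \<le> n" using oki by auto
  have IH: "e i * Zp i p * X i \<in> sp (T3 i p)" using Suc p_def by auto
  have EI: "e i * Zp i p * e i \<in> sp (T1 i)" using Suc.prems p_def by auto
  have z: "Zp i (p+1) = Zp i p * Yj i" using zpow_succ'[OF Zp_inv[OF iN(1,2)]] .
  have "e i * Zp i (p+1) * X i = ((e i * Zp i p) * Xinv i) * Yj (Suc i)"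
    unfolding z using XYrel(3)[OF oki] by (simp add: mult.assoc)
  also have "\<dots> = (e i * Zp i p * X i) * Yj (Suc i) - d * (e i * (Zp i p * Yj (Suc i)))
      + d * ((e i * Zp i p * e i) * Yj (Suc i))"
    unfolding Xinv_exp_r[OF oki] by (simp add: algebra_simps pcM)
  finally have eq: "e i * Zp i (p+1) * X i = \<dots>" .
  have A: "(e i * Zp i p * X i) * Yj (Suc i) \<in> sp (T3 i (p+1))" using H3'(1)[OF oki IH] .
  have "e i * (Zp i p * Yj (Suc i)) = (e i * Yi i) * Zp i p"
    using Zp_comm_Y(1)[OF iN(1,2,3,4), of p] Yeq(2)[OF oki] by (metis mult.assoc)
  also have "\<dots> = e i * Zp i (p - 1)" using zpow_pred[OF Zp_inv[OF iN(1,2)], of p] by (simp add: mult.assoc)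
  finally have B: "e i * (Zp i p * Yj (Suc i)) \<in> sp (T3 i (p+1))"
    using Zp_T3[OF oki, of "p - 1" "p+1"] p0 by (auto intro: sp_base)
  have "e i * Zp i p * e i \<in> sp (T3 i 0)" using sp_mono[OF EI T1_T3[OF oki]] by simp
  then have "(e i * Zp i p * e i) * Yj (Suc i) \<in> sp (T3 i (0+1))" by (rule H3'(1)[OF oki])
  then have C: "(e i * Zp i p * e i) * Yj (Suc i) \<in> sp (T3 i (p+1))"
    by (rule sp_mono) (rule T3_mono, use p0 in simp)
  have "e i * Zp i (p+1) * X i \<in> sp (T3 i (p+1))" unfolding eq
    by (intro sp_add sp_diff sp_smult A B C)
  moreover have h: "int (Suc N) = p + 1" unfolding p_def by simp
  ultimately show ?case unfolding h by simp
qed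

lemma III_neg: assumes oki: "ok i"
  shows "(\<forall>t. \<bar>t\<bar> \<le> int N \<longrightarrow> e i * Zp i t * e i \<in> sp (T1 i)) \<Longrightarrow>
         e i * Zp i (- int N) * X i \<in> sp (T3 i (int N))"
proof (induction N)
  case 0
  have "e i \<in> T3 i 0" using Zp_T3[OF oki, of 0 0] by simp
  then have "l * e i \<in> sp (T3 i 0)" by (intro sp_smult sp_base)
  then show ?case using Xe[OF oki] by simp
next
  case (Suc N)
  define p where "p = - int N"
  have p0: "p \<le> 0" unfolding p_def by simp
  have iN: "1 \<le> i" "i \<le> n" "1 \<le> Suc i" "Suc i \<le> n" using oki by auto
  have IH: "e i * Zp i p * X i \<in> sp (T3 i (- p))" using Suc p_def by auto
  have EI: "e i * Zp i (p - 1) * e i \<in> sp (T1 i)" using Suc.prems p_def by auto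
  have z: "Zp i (p - 1) = Zp i p * Yi i" using zpow_pred'[OF Zp_inv[OF iN(1,2)]] .
  have "e i * Zp i (p - 1) * X i = (e i * Zp i (p - 1)) * Xinv i + d * (e i * Zp i (p - 1))
      - d * (e i * Zp i (p - 1) * e i)"
    unfolding X_exp_r[OF oki, of "e i * Zp i (p - 1)"] by (simp add: mult.assoc)
  also have "(e i * Zp i (p - 1)) * Xinv i = (e i * Zp i p * X i) * Yi (Suc i)"
    unfolding z using XYrel(4)[OF oki] by (simp add: mult.assoc)
  finally have eq: "e i * Zp i (p - 1) * X i = (e i * Zp i p * X i) * Yi (Suc i) + d * (e i * Zp i (p - 1))
      - d * (e i * Zp i (p - 1) * e i)" .
  have A: "(e i * Zp i p * X i) * Yi (Suc i) \<in> sp (T3 i (- p + 1))" using H3'(2)[OF oki IH] .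
  have B: "e i * Zp i (p - 1) \<in> sp (T3 i (- p + 1))"
    using Zp_T3[OF oki, of "p - 1" "-p+1"] p0 by (auto intro: sp_base)
  have C: "e i * Zp i (p - 1) * e i \<in> sp (T3 i (- p + 1))"
    using sp_mono[OF EI T1_T3[OF oki]] p0 by simp
  have "e i * Zp i (p - 1) * X i \<in> sp (T3 i (- p + 1))" unfolding eq
    by (intro sp_add sp_diff sp_smult A B C)
  moreover have h1: "- int (Suc N) = p - 1" and h2: "int (Suc N) = - p + 1" unfolding p_def by simp_all
  ultimately show ?case unfolding h1 h2 by simp
qed

lemma II: assumes "ok i" "\<And>t. \<bar>t\<bar> \<le> \<bar>p\<bar> \<Longrightarrow> e i * Zp i t * e i \<in> sp (T1 i)"
  shows "X i * Zp i p * e i \<in> sp (T2 i \<bar>p\<bar>)"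
proof (cases "0 \<le> p")
  case True
  define N where "N = nat p"
  have "p = int N" using True N_def by simp
  then show ?thesis using II_pos[OF assms(1), of N] assms(2) by auto
next
  case False
  define N where "N = nat (- p)"
  have "p = - int N" using False N_def by simp
  then show ?thesis using II_neg[OF assms(1), of N] assms(2) by auto
qed

lemma III: assumes "ok i" "\<And>t. \<bar>t\<bar> \<le> \<bar>p\<bar> \<Longrightarrow> e i * Zp i t * e i \<in> sp (T1 i)"
  shows "e i * Zp i p * X i \<in> sp (T3 i \<bar>p\<bar>)"
proof (cases "0 \<le> p")
  case True
  define N where "N = nat p"
  have "p = int N" using True N_def by simp
  then show ?thesis using III_pos[OF assms(1), of N] assms(2) by auto
next
  case False
  define N where "N = nat (- p)"
  have "p = - int N" using False N_def by simp
  then show ?thesis using III_neg[OF assms(1), of N] assms(2) by auto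
qed

end



context cb begin

lemma sp_sum: "finite F \<Longrightarrow> (\<And>s. s \<in> F \<Longrightarrow> f s \<in> sp S) \<Longrightarrow> sum f F \<in> sp S"
  using rspan_sum[OF alg] .

definition "Pk = (\<lambda>j. Y ^ j) ` {..<k}"

lemma Pk_mem: "j < k \<Longrightarrow> Y ^ j \<in> Pk"
  unfolding Pk_def by (rule image_eqI[of _ _ j]) auto

lemma Yk_sp: "Y ^ k \<in> sp Pk"
  unfolding Ypoly by (intro sp_sum sp_smult sp_base) (auto simp: Pk_def)

lemma Yinv_sp: assumes k1: "1 \<le> k" shows "Yinv \<in> sp Pk"
proof -
  obtain k' where kk: "k = Suc k'" using k1 by (cases k) auto
  obtain u where u: "1 = qq 0 * u" using qq0 unfolding dvd_def by blast
  have "Y ^ k = (\<Sum>i<Suc k'. \<phi> (qq i) * Y ^ i)" using Ypoly kk by simp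
  also have "\<dots> = (\<Sum>i<k'. \<phi> (qq (Suc i)) * Y ^ Suc i) + \<phi> (qq 0)"
    unfolding sum.lessThan_Suc_shift by (simp add: add.commute)
  finally have e1: "Y ^ k = (\<Sum>i<k'. \<phi> (qq (Suc i)) * Y ^ Suc i) + \<phi> (qq 0)" .
  have "Y ^ k' = Yinv * Y ^ k" unfolding kk using YY by (simp add: mult.assoc[symmetric])
  also have "\<dots> = (\<Sum>i<k'. Yinv * (\<phi> (qq (Suc i)) * Y ^ Suc i)) + Yinv * \<phi> (qq 0)"
    unfolding e1 by (simp add: distrib_left sum_distrib_left)
  also have "\<dots> = (\<Sum>i<k'. \<phi> (qq (Suc i)) * Y ^ i) + \<phi> (qq 0) * Yinv"
  proof -
    have "Yinv * (\<phi> (qq (Suc i)) * Y ^ Suc i) = \<phi> (qq (Suc i)) * Y ^ i" for i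
    proof -
      have "Yinv * (\<phi> (qq (Suc i)) * Y ^ Suc i) = \<phi> (qq (Suc i)) * (Yinv * (Y * Y ^ i))"
        by (simp only: pcM power_Suc)
      also have "\<dots> = \<phi> (qq (Suc i)) * Y ^ i" using YY by (simp add: mult.assoc[symmetric])
      finally show ?thesis .
    qed
    then show ?thesis by (simp add: pcR)
  qed
  finally have "\<phi> (qq 0) * Yinv = Y ^ k' - (\<Sum>i<k'. \<phi> (qq (Suc i)) * Y ^ i)" by (simp add: algebra_simps)
  moreover have "Y ^ k' - (\<Sum>i<k'. \<phi> (qq (Suc i)) * Y ^ i) \<in> sp Pk"
    by (intro sp_diff sp_sum sp_smult sp_base Pk_mem) (auto simp: kk)
  ultimately have "\<phi> u * (\<phi> (qq 0) * Yinv) \<in> sp Pk" by (simp add: sp_smult)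
  moreover have "\<phi> u * \<phi> (qq 0) = 1" using u pm[of u "qq 0"] p1 by (simp add: mult.commute)
  ultimately show ?thesis by (simp add: mult.assoc[symmetric])
qed

lemma zpowY_sp: assumes k1: "1 \<le> k" shows "zpow Y Yinv p \<in> sp Pk"
proof (induction p rule: int_induct[where k=0])
  case base
  have "Y ^ 0 \<in> Pk" unfolding Pk_def by (rule image_eqI[of _ _ 0]) (use k1 in auto)
  then show ?case by (simp add: sp_base)
next
  case (step1 p)
  have "Y * zpow Y Yinv p \<in> sp Pk"
  proof (rule sp_lmult[OF step1(2)])
    fix g assume "g \<in> Pk"
    then obtain j where j: "j < k" "g = Y ^ j" unfolding Pk_def by auto
    show "Y * g \<in> sp Pk"
    proof (cases "Suc j < k")
      case True then show ?thesis using j Pk_mem[of "Suc j"] by (intro sp_base) simp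
    next
      case False then have "Suc j = k" using j by simp
      then have "Y * g = Y ^ k" using j by (metis power_Suc)
      then show ?thesis using Yk_sp by simp
    qed
  qed
  then show ?case using zpow_succ[OF YY] by simp
next
  case (step2 p)
  have "Yinv * zpow Y Yinv p \<in> sp Pk"
  proof (rule sp_lmult[OF step2(2)])
    fix g assume "g \<in> Pk"
    then obtain j where j: "j < k" "g = Y ^ j" unfolding Pk_def by auto
    show "Yinv * g \<in> sp Pk"
    proof (cases j)
      case 0 then show ?thesis using j Yinv_sp[OF k1] by simp
    next
      case (Suc j')
      then have "Yinv * g = Y ^ j'" using j YY by (simp add: mult.assoc[symmetric])
      then show ?thesis using j Suc Pk_mem[of j'] by (auto intro!: sp_base)
    qed
  qed
  then show ?case using zpow_pred[OF YY] by simp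
qed

lemma level1: assumes k1: "1 \<le> k" and ok1: "ok 1"
  shows "e 1 * Zp 1 p * e 1 \<in> sp (T1 1)"
proof -
  have T: "e 1 \<in> T1 1" unfolding T1_def by auto
  have x: "zpow Y Yinv p \<in> sp Pk" by (rule zpowY_sp[OF k1])
  have "zpow Y Yinv p * e 1 \<in> sp ((\<lambda>j. Y ^ j * e 1) ` {..<k})"
    by (rule sp_rmult[OF x]) (auto simp: Pk_def intro!: sp_base)
  then have "e 1 * (zpow Y Yinv p * e 1) \<in> sp (T1 1)"
  proof (rule sp_lmult)
    fix g assume "g \<in> (\<lambda>j. Y ^ j * e 1) ` {..<k}"
    then obtain j where j: "j < k" "g = Y ^ j * e 1" by auto
    have "e 1 * g = \<phi> (A j) * e 1" using eYe[OF ok1 j(1)] j by (simp add: mult.assoc)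
    then show "e 1 * g \<in> sp (T1 1)" using T by (simp add: sp_smult sp_base)
  qed
  then show ?thesis by (simp add: mult.assoc)
qed

end



lemma sp_sand: assumes alg: "is_R_algebra \<phi>" and "x \<in> rspan \<phi> S"
  and "\<And>g. g \<in> S \<Longrightarrow> u * g * v \<in> rspan \<phi> T" shows "u * x * v \<in> rspan \<phi> T"
proof -
  have "x * v \<in> rspan \<phi> ((\<lambda>g. g * v) ` S)"
    by (rule rspan_rmult[OF alg assms(2)]) (auto intro: rspan_base[OF alg])
  then have "u * (x * v) \<in> rspan \<phi> T"
    by (rule rspan_lmult[OF alg]) (use assms(3) in \<open>auto simp: mult.assoc\<close>)
  then show ?thesis by (simp add: mult.assoc)
qed

context cb begin

lemma Ym_comm_le: assumes "ok i" "m \<le> i - 1"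
  shows "Ym s m * e i = e i * Ym s m" "Ym s m * X i = X i * Ym s m" "Ym s m * Xinv i = Xinv i * Ym s m"
proof -
  have h: "Yj j * w = w * Yj j \<and> Yi j * w = w * Yi j" if "1 \<le> j" "j \<le> m" "w \<in> {e i, X i, Xinv i}" for j w
    using YcommX[of j i] YcommX'[of j i] that assms by auto
  show "Ym s m * e i = e i * Ym s m" by (rule Ym_comm) (use h in auto)
  show "Ym s m * X i = X i * Ym s m" by (rule Ym_comm) (use h in auto)
  show "Ym s m * Xinv i = Xinv i * Ym s m" by (rule Ym_comm) (use h in auto)
qed

lemma Zp_comm_le: assumes "ok i" "1 \<le> j" "j < i"
  shows "Zp j t * e i = e i * Zp j t" "Zp j t * X i = X i * Zp j t" "Zp j t * Xinv i = Xinv i * Zp j t"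
  using zpow_comm[of "Yj j" _ "Yi j" t] YcommX[of j i] YcommX'[of j i] assms by auto

definition "SS j N = {Ym s j * Zp (Suc j) t * e (Suc j) | s t. \<bar>t\<bar> \<le> N}
  \<union> {Ym s j * e j * Zp j t * e (Suc j) | s t. True} \<union> {Ym s j * X j * e (Suc j) | s. True}"

definition "UU i = {Ym s i * e i | s. True}"

end

locale cbstep = cb +
  fixes j :: nat
  assumes okj: "ok j" and oki: "ok (Suc j)"
    and IJ: "\<And>p. e j * Zp j p * e j \<in> sp (T1 j)"
    and IIIJ: "\<And>p. e j * Zp j p * X j \<in> sp (T3 j \<bar>p\<bar>)"
begin

abbreviation "Tg \<equiv> T1 (Suc j)"

lemma jn: "1 \<le> j" "j \<le> n" "Suc j \<le> n" "1 \<le> Suc j" using oki okj by auto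

lemma Ym_dec: "Ym s j = Ym s (j - 1) * Zp j (s j)" using Ym_split[OF okj] .
lemma Ym_low_upd: "Ym s (j - 1) = Ym (s(j := x)) (j - 1)" using Ym_upd_low[OF okj] by simp
lemma Ym_low_Zp: "Ym s (j - 1) * Zp j x = Ym (s(j := x)) j"
  using Ym_dec[of "s(j := x)"] Ym_low_upd[of s x] by simp
lemma Ym_i: "Ym s (Suc j) = Ym s j * Zp (Suc j) (s (Suc j))" using Ym_Suc .

lemma C1: "Ym s j * e (Suc j) = e (Suc j) * Ym s j" "Ym s j * X (Suc j) = X (Suc j) * Ym s j"
  "Ym s j * Xinv (Suc j) = Xinv (Suc j) * Ym s j"
  using Ym_low_comm[OF oki] by auto
lemma C2: "Ym s (j - 1) * e (Suc j) = e (Suc j) * Ym s (j - 1)"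
  "Ym s (j - 1) * e j = e j * Ym s (j - 1)" "Ym s (j - 1) * X j = X j * Ym s (j - 1)"
  using Ym_comm_le[OF oki, of "j - 1"] Ym_low_comm[OF okj] by auto
lemma C3: "Zp j t * e (Suc j) = e (Suc j) * Zp j t" "Zp j t * X (Suc j) = X (Suc j) * Zp j t"
  "Zp j t * Xinv (Suc j) = Xinv (Suc j) * Zp j t"
  using Zp_comm_le[OF oki, of j] jn by auto

lemma Tg_def': "Tg = {Ym s j * e (Suc j) | s. True}" unfolding T1_def by simp

lemma Tg_mem: "Ym s j * e (Suc j) \<in> sp Tg" unfolding Tg_def' by (rule sp_base) auto

lemma Tg_lmult: "x \<in> sp Tg \<Longrightarrow> Ym s j * x \<in> sp Tg"
proof (erule sp_lmult)
  fix g assume "g \<in> Tg"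
  then obtain s' where g: "g = Ym s' j * e (Suc j)" unfolding Tg_def' by auto
  have "Ym s j * g = Ym (\<lambda>x. s x + s' x) j * e (Suc j)" using g Ym_mult[OF jn(2)] by (simp add: mult.assoc[symmetric])
  then show "Ym s j * g \<in> sp Tg" using Tg_mem by simp
qed

lemma Tg_rmult: "x \<in> sp Tg \<Longrightarrow> x * Zp j t \<in> sp Tg"
proof (erule sp_rmult)
  fix g assume "g \<in> Tg"
  then obtain s' where g: "g = Ym s' j * e (Suc j)" unfolding Tg_def' by auto
  have "g * Zp j t = (Ym s' j * Zp j t) * e (Suc j)" using g C3(1) by (simp add: mult.assoc)
  also have "\<dots> = Ym (s'(j := s' j + t)) j * e (Suc j)" using Ym_mult_Zp[of j j s' t] jn by simp
  finally show "g * Zp j t \<in> sp Tg" using Tg_mem by simp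
qed

lemma ejZ: "e j * Zp (Suc j) v = e j * Zp j (-v)" using Zp_shift(2)[OF okj] .

lemma C2l: "e (Suc j) * (Ym s (j - 1) * x) = Ym s (j - 1) * (e (Suc j) * x)"
  "e j * (Ym s (j - 1) * x) = Ym s (j - 1) * (e j * x)"
  by (simp_all only: mult.assoc[symmetric] C2)

lemma eiej: "e (Suc j) * e j * e (Suc j) = e (Suc j)" using adj3[OF oki okj] by simp
lemma eiejl: "e (Suc j) * (e j * (e (Suc j) * x)) = e (Suc j) * x"
  using eiej by (simp add: mult.assoc[symmetric])

lemma K1: "e (Suc j) * e j * (Ym s (Suc j) * e (Suc j)) \<in> sp Tg"
proof -
  define m where "m = Ym s (j - 1)"
  define r where "r = s j"
  define v where "v = s (Suc j)"
  have Ys: "Ym s (Suc j) = m * (Zp j r * Zp (Suc j) v)" unfolding m_def r_def v_def Ym_i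
    by (simp add: Ym_dec mult.assoc)
  have c1: "e (Suc j) * (e j * (m * x)) = m * (e (Suc j) * (e j * x))" for x
    unfolding m_def using C2l by (simp add: mult.assoc)
  have "Zp j r * Zp (Suc j) v = Zp (Suc j) v * Zp j r" using Zp_comm jn by simp
  then have "e j * (Zp j r * (Zp (Suc j) v * e (Suc j))) = e j * Zp (Suc j) v * (Zp j r * e (Suc j))"
    by (simp add: mult.assoc[symmetric])
  also have "\<dots> = e j * (Zp j (-v) * Zp j r) * e (Suc j)" using ejZ by (simp add: mult.assoc)
  also have "\<dots> = e j * Zp j (r - v) * e (Suc j)" using Zp_add[OF jn(1,2), of "-v" r] by simp
  finally have eq: "e j * (Zp j r * (Zp (Suc j) v * e (Suc j))) = e j * Zp j (r - v) * e (Suc j)" .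
  have "e (Suc j) * e j * (Ym s (Suc j) * e (Suc j)) = m * (e (Suc j) * (e j * (Zp j r * (Zp (Suc j) v * e (Suc j)))))"
    unfolding Ys using c1 by (simp add: mult.assoc)
  also have "\<dots> = m * (e (Suc j) * (e j * (e (Suc j) * Zp j (r - v))))"
    unfolding eq using C3(1) by (simp add: mult.assoc)
  also have "\<dots> = (m * Zp j (r - v)) * e (Suc j)" using eiejl C3(1) by (simp add: mult.assoc)
  also have "\<dots> = Ym (s(j := r - v)) j * e (Suc j)" unfolding m_def using Ym_low_Zp by simp
  finally show ?thesis using Tg_mem by simp
qed

lemma K1': "x \<in> sp (UU (Suc j)) \<Longrightarrow> e (Suc j) * e j * (Ym s j * x) \<in> sp Tg"
proof -
  assume x: "x \<in> sp (UU (Suc j))"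
  have "e (Suc j) * e j * (Ym s j * x) = (e (Suc j) * e j * Ym s j) * x" by (simp add: mult.assoc)
  also have "\<dots> \<in> sp Tg"
  proof (rule sp_lmult[OF x])
    fix g assume "g \<in> UU (Suc j)"
    then obtain s' where g: "g = Ym s' (Suc j) * e (Suc j)" unfolding UU_def by auto
    have "Ym s j * Ym s' (Suc j) = Ym (\<lambda>x. s x + s' x) j * Zp (Suc j) (s' (Suc j))"
      unfolding Ym_i using Ym_mult[OF jn(2)] by (simp add: mult.assoc[symmetric])
    also have "\<dots> = Ym ((\<lambda>x. s x + s' x)(Suc j := s' (Suc j))) (Suc j)"
      unfolding Ym_i using Ym_cong[of j "(\<lambda>x. s x + s' x)(Suc j := s' (Suc j))" "\<lambda>x. s x + s' x"] by simp
    finally have eqY: "Ym s j * Ym s' (Suc j) = Ym ((\<lambda>x. s x + s' x)(Suc j := s' (Suc j))) (Suc j)" .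
    have "e (Suc j) * e j * Ym s j * g = e (Suc j) * e j * (Ym ((\<lambda>x. s x + s' x)(Suc j := s' (Suc j))) (Suc j) * e (Suc j))"
      using g lift[OF eqY] by (simp add: mult.assoc)
    then show "e (Suc j) * e j * Ym s j * g \<in> sp Tg" using K1 by simp
  qed
  finally show ?thesis .
qed

lemma sandw: assumes "x \<in> sp (T3 j N)" shows "e (Suc j) * x * e (Suc j) \<in> sp Tg"
proof (rule sp_sand[OF alg assms])
  fix g assume "g \<in> T3 j N"
  then obtain s where g: "g = e j * Ym s j" unfolding T3_def by auto
  have "e (Suc j) * g * e (Suc j) = e (Suc j) * e j * e (Suc j) * Ym s j" using g C1(1) by (simp add: mult.assoc)
  also have "\<dots> = Ym s j * e (Suc j)" using eiej C1(1) by simp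
  finally show "e (Suc j) * g * e (Suc j) \<in> sp Tg" using Tg_mem by simp
qed

lemma sandw1: assumes "x \<in> sp (T1 j)" shows "e (Suc j) * x * e (Suc j) \<in> sp Tg"
proof (rule sp_sand[OF alg assms])
  fix g assume "g \<in> T1 j"
  then obtain s where g: "g = Ym s (j - 1) * e j" unfolding T1_def by auto
  have "e (Suc j) * g * e (Suc j) = Ym s (j - 1) * (e (Suc j) * e j * e (Suc j))" using g C2l by (simp add: mult.assoc)
  also have "\<dots> = Ym s (j - 1) * e (Suc j)" using eiej by simp
  also have "\<dots> = Ym (s(j := 0)) j * e (Suc j)" using Ym_low_Zp[of s 0] by simp
  finally show "e (Suc j) * g * e (Suc j) \<in> sp Tg" using Tg_mem by simp
qed

lemma K2: "e (Suc j) * e j * (Ym s j * (X j * e (Suc j))) \<in> sp Tg"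
proof -
  define m where "m = Ym s (j - 1)"
  have "e (Suc j) * e j * (Ym s j * (X j * e (Suc j))) = m * (e (Suc j) * (e j * Zp j (s j) * X j) * e (Suc j))"
    unfolding m_def Ym_dec using C2l by (simp add: mult.assoc)
  also have "\<dots> \<in> sp Tg"
  proof -
    have "e (Suc j) * (e j * Zp j (s j) * X j) * e (Suc j) \<in> sp Tg" using sandw[OF IIIJ] .
    then have "Ym (s(j := 0)) j * (e (Suc j) * (e j * Zp j (s j) * X j) * e (Suc j)) \<in> sp Tg" by (rule Tg_lmult)
    moreover have "Ym (s(j := 0)) j = m" unfolding m_def using Ym_low_Zp[of s 0] by simp
    ultimately show ?thesis by simp
  qed
  finally show ?thesis .
qed

lemma K3: "e (Suc j) * e j * (Ym s j * (e j * e (Suc j))) \<in> sp Tg"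
proof -
  define m where "m = Ym s (j - 1)"
  have "e (Suc j) * e j * (Ym s j * (e j * e (Suc j))) = m * (e (Suc j) * (e j * Zp j (s j) * e j) * e (Suc j))"
    unfolding m_def Ym_dec using C2l by (simp add: mult.assoc)
  also have "\<dots> \<in> sp Tg"
  proof -
    have "e (Suc j) * (e j * Zp j (s j) * e j) * e (Suc j) \<in> sp Tg" using sandw1[OF IJ] .
    then have "Ym (s(j := 0)) j * (e (Suc j) * (e j * Zp j (s j) * e j) * e (Suc j)) \<in> sp Tg" by (rule Tg_lmult)
    moreover have "Ym (s(j := 0)) j = m" unfolding m_def using Ym_low_Zp[of s 0] by simp
    ultimately show ?thesis by simp
  qed
  finally show ?thesis .
qed

end



context cbstep begin

lemma Wd: "Yj (Suc j) = X j * Yj j * X j" "Yi (Suc j) = Xinv j * Yi j * Xinv j"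
  using Yp_Suc[OF jn(1)] Yp_Suc[OF jn(1), of Yinv Xinv] by auto

lemma eia: "e (Suc j) * X j = e (Suc j) * e j * Xinv (Suc j)"
proof -
  have "e (Suc j) * e j = e (Suc j) * X j * X (Suc j)" using adj2[OF okj oki] by simp
  then have "e (Suc j) * e j * Xinv (Suc j) = e (Suc j) * X j * (X (Suc j) * Xinv (Suc j))" by (simp add: mult.assoc)
  then show ?thesis using XX[OF oki] by simp
qed

lemma aei: "Xinv (Suc j) * (e j * e (Suc j)) = X j * e (Suc j)"
proof -
  have "X (Suc j) * X j * e (Suc j) = e j * e (Suc j)" using adj1[OF oki okj] by simp
  then have "Xinv (Suc j) * (e j * e (Suc j)) = Xinv (Suc j) * (X (Suc j) * (X j * e (Suc j)))" by (simp add: mult.assoc)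
  then show ?thesis using XXl[OF oki] by simp
qed

lemma eiaei: "e (Suc j) * (X j * e (Suc j)) = li * e (Suc j)"
proof -
  have "e (Suc j) * (X j * e (Suc j)) = e (Suc j) * e j * (Xinv (Suc j) * e (Suc j))" using eia by (simp add: mult.assoc[symmetric])
  also have "\<dots> = li * (e (Suc j) * e j * e (Suc j))" using Xinv_e[OF oki] by (simp add: pcM mult.assoc)
  finally show ?thesis using eiej by simp
qed

lemma ZpYm: "Zp j r * Ym s j = Ym (s(j := s j + r)) j"
  using Ym_comm_Zp[of j j s r] Ym_mult_Zp[of j j s r] jn by simp

lemma SS_Z: assumes "x \<in> sp (SS j N)" shows "Zp j r * x \<in> sp (SS j N)"
proof (rule sp_lmult[OF assms])
  fix g assume "g \<in> SS j N"
  then consider (a) s t where "g = Ym s j * Zp (Suc j) t * e (Suc j)" "\<bar>t\<bar> \<le> N"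
    | (b) s t where "g = Ym s j * e j * Zp j t * e (Suc j)"
    | (c) s where "g = Ym s j * X j * e (Suc j)" unfolding SS_def by blast
  then show "Zp j r * g \<in> sp (SS j N)"
  proof cases
    case a then show ?thesis using ZpYm by (intro sp_base) (auto simp: SS_def mult.assoc[symmetric])
  next
    case b then show ?thesis using ZpYm by (intro sp_base) (auto simp: SS_def mult.assoc[symmetric])
  next
    case c then show ?thesis using ZpYm by (intro sp_base) (auto simp: SS_def mult.assoc[symmetric])
  qed
qed

lemma SS_mono: "N \<le> N' \<Longrightarrow> SS j N \<subseteq> SS j N'" unfolding SS_def by (intro Un_mono) fastforce+

lemma XW: "Xinv j * (Yj (Suc j) * w) = Yj j * (X j * w)" "X j * (Yi (Suc j) * w) = Yi j * (Xinv j * w)"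
  unfolding Wd using XXl[OF okj] by (simp_all add: mult.assoc)

lemma SS_1: "\<bar>q\<bar> \<le> N \<Longrightarrow> Zp (Suc j) q * e (Suc j) \<in> sp (SS j N)"
  using Ym_zero[of j] by (intro sp_base) (auto simp: SS_def intro!: exI[of _ "\<lambda>_. 0"])
lemma SS_2: "e j * Zp (Suc j) q * e (Suc j) \<in> sp (SS j N)"
proof -
  have "e j * Zp (Suc j) q * e (Suc j) = Ym (\<lambda>_. 0) j * e j * Zp j (-q) * e (Suc j)" using ejZ Ym_zero by simp
  then show ?thesis by (intro sp_base) (auto simp: SS_def)
qed
lemma SS_3: "X j * e (Suc j) \<in> sp (SS j N)"
  using Ym_zero[of j] by (intro sp_base) (auto simp: SS_def intro!: exI[of _ "\<lambda>_. 0"])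

lemma G_pos: "X j * Zp (Suc j) (int N) * e (Suc j) \<in> sp (SS j (int N))"
proof (induction N)
  case 0 then show ?case using SS_3 by simp
next
  case (Suc N)
  define p where "p = int N"
  have IH: "X j * Zp (Suc j) p * e (Suc j) \<in> sp (SS j p)" using Suc p_def by simp
  have z: "Zp (Suc j) (p+1) = Yj (Suc j) * Zp (Suc j) p" using zpow_succ[OF Zp_inv[OF jn(4,3)]] .
  have "X j * Zp (Suc j) (p+1) * e (Suc j) = Xinv j * (Zp (Suc j) (p+1) * e (Suc j)) + d * (Zp (Suc j) (p+1) * e (Suc j))
     - d * (e j * (Zp (Suc j) (p+1) * e (Suc j)))"
    using X_exp_l[OF okj, of "Zp (Suc j) (p+1) * e (Suc j)"] by (simp add: mult.assoc)
  also have "Xinv j * (Zp (Suc j) (p+1) * e (Suc j)) = Zp j 1 * (X j * Zp (Suc j) p * e (Suc j))"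
    unfolding z zpow_1 using XW by (simp add: mult.assoc)
  finally have eq: "X j * Zp (Suc j) (p+1) * e (Suc j) = Zp j 1 * (X j * Zp (Suc j) p * e (Suc j))
     + d * (Zp (Suc j) (p+1) * e (Suc j)) - d * (e j * Zp (Suc j) (p+1) * e (Suc j))" by (simp add: mult.assoc)
  have A: "Zp j 1 * (X j * Zp (Suc j) p * e (Suc j)) \<in> sp (SS j (p+1))"
    using sp_mono[OF SS_Z[OF IH] SS_mono[of p "p+1"]] by simp
  have "X j * Zp (Suc j) (p+1) * e (Suc j) \<in> sp (SS j (p+1))" unfolding eq
    using p_def by (intro sp_add sp_diff sp_smult A SS_1 SS_2) simp
  moreover have h: "int (Suc N) = p + 1" unfolding p_def by simp
  ultimately show ?case unfolding h by simp
qed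

lemma G_neg: "X j * Zp (Suc j) (- int N) * e (Suc j) \<in> sp (SS j (int N))"
proof (induction N)
  case 0 then show ?case using SS_3 by simp
next
  case (Suc N)
  define p where "p = - int N"
  have IH: "X j * Zp (Suc j) p * e (Suc j) \<in> sp (SS j (-p))" using Suc p_def by simp
  have z: "Zp (Suc j) (p - 1) = Yi (Suc j) * Zp (Suc j) p" using zpow_pred[OF Zp_inv[OF jn(4,3)]] .
  have "X j * Zp (Suc j) (p - 1) * e (Suc j) = Zp j (-1) * (Xinv j * (Zp (Suc j) p * e (Suc j)))"
    unfolding z zpow_m1 using XW by (simp add: mult.assoc)
  also have "Xinv j * (Zp (Suc j) p * e (Suc j)) = X j * Zp (Suc j) p * e (Suc j) - d * (Zp (Suc j) p * e (Suc j))
     + d * (e j * Zp (Suc j) p * e (Suc j))"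
    using Xinv_exp_l[OF okj, of "Zp (Suc j) p * e (Suc j)"] by (simp add: mult.assoc)
  finally have eq: "X j * Zp (Suc j) (p - 1) * e (Suc j) = Zp j (-1) * (X j * Zp (Suc j) p * e (Suc j) - d * (Zp (Suc j) p * e (Suc j))
     + d * (e j * Zp (Suc j) p * e (Suc j)))" .
  have "X j * Zp (Suc j) p * e (Suc j) - d * (Zp (Suc j) p * e (Suc j)) + d * (e j * Zp (Suc j) p * e (Suc j)) \<in> sp (SS j (-p))"
    by (intro sp_add sp_diff sp_smult IH SS_1 SS_2) (simp add: p_def)
  then have "X j * Zp (Suc j) (p - 1) * e (Suc j) \<in> sp (SS j (-p))" unfolding eq by (rule SS_Z)
  then have "X j * Zp (Suc j) (p - 1) * e (Suc j) \<in> sp (SS j (-p + 1))" using sp_mono SS_mono[of "-p" "-p+1"] by auto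
  moreover have h1: "- int (Suc N) = p - 1" and h2: "int (Suc N) = - p + 1" unfolding p_def by simp_all
  ultimately show ?case unfolding h1 h2 by simp
qed

lemma G: "X j * Zp (Suc j) q * e (Suc j) \<in> sp (SS j \<bar>q\<bar>)"
proof (cases "0 \<le> q")
  case True
  then have "q = int (nat q)" by simp
  then show ?thesis using G_pos[of "nat q"] by (metis abs_of_nat)
next
  case False
  then have "q = - int (nat (-q))" by simp
  moreover have "\<bar>q\<bar> = int (nat (-q))" using False by simp
  ultimately show ?thesis using G_neg[of "nat (-q)"] by metis
qed

lemma G': "Xinv j * Zp (Suc j) q * e (Suc j) \<in> sp (SS j \<bar>q\<bar>)"
proof -
  have "Xinv j * Zp (Suc j) q * e (Suc j) = X j * Zp (Suc j) q * e (Suc j) - d * (Zp (Suc j) q * e (Suc j))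
     + d * (e j * Zp (Suc j) q * e (Suc j))"
    using Xinv_exp_l[OF okj, of "Zp (Suc j) q * e (Suc j)"] by (simp add: mult.assoc)
  also have "\<dots> \<in> sp (SS j \<bar>q\<bar>)" by (intro sp_add sp_diff sp_smult G SS_1 SS_2) simp
  finally show ?thesis .
qed

end



context cbstep begin

lemma T2_UU: "T2 i N \<subseteq> UU i" unfolding T2_def UU_def by auto

lemma Tg_UU: "x \<in> sp Tg \<Longrightarrow> x \<in> sp (UU (Suc j))"
  using sp_mono T1_T2[OF oki, of 0] T2_UU by blast

lemma C1l: "Xinv (Suc j) * (Ym s j * w) = Ym s j * (Xinv (Suc j) * w)"
  "e (Suc j) * (Ym s j * w) = Ym s j * (e (Suc j) * w)"
  by (simp_all only: mult.assoc[symmetric] C1)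

lemma W_l: "Yj (Suc j) * w = X j * (Yj j * (X j * w))" "Yi (Suc j) * w = Xinv j * (Yi j * (Xinv j * w))"
  using Wd by (simp_all add: mult.assoc)

lemma C3l: "Zp j t * (e (Suc j) * w) = e (Suc j) * (Zp j t * w)"
  by (simp only: mult.assoc[symmetric] C3)

context
  fixes M :: int
  assumes H: "\<And>t. \<bar>t\<bar> \<le> M \<Longrightarrow> e (Suc j) * Zp (Suc j) t * e (Suc j) \<in> sp Tg"
begin

lemma Q1: assumes "g \<in> SS j M" shows "e (Suc j) * e j * (Xinv (Suc j) * g) \<in> sp Tg"
proof -
  from assms consider (a) s t where "g = Ym s j * Zp (Suc j) t * e (Suc j)" "\<bar>t\<bar> \<le> M"
    | (b) s t where "g = Ym s j * e j * Zp j t * e (Suc j)"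
    | (c) s where "g = Ym s j * X j * e (Suc j)" unfolding SS_def by blast
  then show ?thesis
  proof cases
    case a
    have Ht: "\<And>t'. \<bar>t'\<bar> \<le> \<bar>t\<bar> \<Longrightarrow> e (Suc j) * Zp (Suc j) t' * e (Suc j) \<in> sp (T1 (Suc j))"
      using H a(2) by simp
    have "Xinv (Suc j) * (Zp (Suc j) t * e (Suc j)) = X (Suc j) * Zp (Suc j) t * e (Suc j) - d * (Zp (Suc j) t * e (Suc j))
        + d * (e (Suc j) * Zp (Suc j) t * e (Suc j))"
      using Xinv_exp_l[OF oki, of "Zp (Suc j) t * e (Suc j)"] by (simp add: mult.assoc)
    also have "\<dots> \<in> sp (UU (Suc j))"
    proof (intro sp_add sp_diff sp_smult)
      show "X (Suc j) * Zp (Suc j) t * e (Suc j) \<in> sp (UU (Suc j))"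
        using sp_mono[OF II[OF oki Ht] T2_UU] .
      show "Zp (Suc j) t * e (Suc j) \<in> sp (UU (Suc j))"
        using Zp_T2[OF oki, of t "\<bar>t\<bar>"] T2_UU by (auto intro: sp_base)
      show "e (Suc j) * Zp (Suc j) t * e (Suc j) \<in> sp (UU (Suc j))" using Tg_UU H a(2) by simp
    qed
    finally have x: "Xinv (Suc j) * (Zp (Suc j) t * e (Suc j)) \<in> sp (UU (Suc j))" .
    have "e (Suc j) * e j * (Xinv (Suc j) * g) = e (Suc j) * e j * (Ym s j * (Xinv (Suc j) * (Zp (Suc j) t * e (Suc j))))"
      using a(1) C1l by (simp add: mult.assoc)
    then show ?thesis using K1'[OF x] by simp
  next
    case b
    have "e (Suc j) * e j * (Xinv (Suc j) * g) = e (Suc j) * e j * (Ym s j * (Xinv (Suc j) * (e j * e (Suc j)))) * Zp j t"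
      using b C1l C3(1) by (simp add: mult.assoc)
    also have "\<dots> = e (Suc j) * e j * (Ym s j * (X j * e (Suc j))) * Zp j t" using aei by simp
    finally show ?thesis using Tg_rmult[OF K2] by simp
  next
    case c
    have bb: "Xinv (Suc j) * (X j * e (Suc j)) = e j * e (Suc j) - d * (X j * e (Suc j)) + d * (li * e (Suc j))"
    proof -
      have "Xinv (Suc j) * (X j * e (Suc j)) = Xinv (Suc j) * (Xinv (Suc j) * (e j * e (Suc j)))" using aei by simp
      also have "\<dots> = X (Suc j) * (Xinv (Suc j) * (e j * e (Suc j))) - d * (Xinv (Suc j) * (e j * e (Suc j)))
         + d * (e (Suc j) * Xinv (Suc j) * (e j * e (Suc j)))"
        using Xinv_exp_l[OF oki] by (simp add: mult.assoc)
      also have "\<dots> = e j * e (Suc j) - d * (X j * e (Suc j)) + d * (li * (e (Suc j) * e j * e (Suc j)))"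
        using XXl[OF oki] aei Xinv_e(2)[OF oki] adj1[OF oki okj] by (simp add: mult.assoc)
      finally show ?thesis using eiej by simp
    qed
    define cc where "cc = li * e (Suc j)"
    have "e (Suc j) * e j * (Xinv (Suc j) * g) = e (Suc j) * e j * (Ym s j * (Xinv (Suc j) * (X j * e (Suc j))))"
      using c C1l by (simp add: mult.assoc)
    also have "\<dots> = e (Suc j) * e j * (Ym s j * (e j * e (Suc j))) - d * (e (Suc j) * e j * (Ym s j * (X j * e (Suc j))))
        + d * (e (Suc j) * e j * (Ym s j * cc))"
      unfolding bb cc_def[symmetric] by (simp add: algebra_simps pcM)
    also have "e (Suc j) * e j * (Ym s j * cc) = li * (Ym s j * e (Suc j))"
    proof -
      have "e (Suc j) * e j * (Ym s j * cc) = li * (e (Suc j) * e j * (Ym s j * e (Suc j)))"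
        unfolding cc_def by (simp add: pcM mult.assoc)
      also have "e (Suc j) * e j * (Ym s j * e (Suc j)) = Ym s j * e (Suc j)"
        using C1(1) eiej by (simp add: mult.assoc[symmetric])
      finally show ?thesis .
    qed
    finally have eq: "e (Suc j) * e j * (Xinv (Suc j) * g) = e (Suc j) * e j * (Ym s j * (e j * e (Suc j))) -
      d * (e (Suc j) * e j * (Ym s j * (X j * e (Suc j)))) + d * (li * (Ym s j * e (Suc j)))" .
    show ?thesis unfolding eq by (intro sp_add sp_diff sp_smult K2 K3 Tg_mem)
  qed
qed

lemma Q2: assumes "g \<in> SS j M" shows "e (Suc j) * g \<in> sp Tg"
proof -
  from assms consider (a) s t where "g = Ym s j * Zp (Suc j) t * e (Suc j)" "\<bar>t\<bar> \<le> M"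
    | (b) s t where "g = Ym s j * e j * Zp j t * e (Suc j)"
    | (c) s where "g = Ym s j * X j * e (Suc j)" unfolding SS_def by blast
  then show ?thesis
  proof cases
    case a
    have "e (Suc j) * g = Ym s j * (e (Suc j) * Zp (Suc j) t * e (Suc j))" using a C1l by (simp add: mult.assoc)
    then show ?thesis using Tg_lmult H a(2) by simp
  next
    case b
    have "e (Suc j) * g = Ym s j * (e (Suc j) * (e j * (e (Suc j) * Zp j t)))" using b C1l C3 by (simp add: mult.assoc)
    also have "\<dots> = Ym s j * e (Suc j) * Zp j t" using eiejl by (simp add: mult.assoc)
    finally show ?thesis using Tg_rmult[OF Tg_mem] by simp
  next
    case c
    have "e (Suc j) * g = Ym s j * (e (Suc j) * (X j * e (Suc j)))" using c C1l by (simp add: mult.assoc)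
    also have "\<dots> = li * (Ym s j * e (Suc j))" using eiaei by (simp add: pcM)
    finally show ?thesis using sp_smult[OF Tg_mem] by simp
  qed
qed

lemma Q3: assumes "g \<in> SS j M" shows "e (Suc j) * e j * g \<in> sp Tg"
proof -
  from assms consider (a) s t where "g = Ym s j * Zp (Suc j) t * e (Suc j)" "\<bar>t\<bar> \<le> M"
    | (b) s t where "g = Ym s j * e j * Zp j t * e (Suc j)"
    | (c) s where "g = Ym s j * X j * e (Suc j)" unfolding SS_def by blast
  then show ?thesis
  proof cases
    case a
    have "Ym (s(Suc j := t)) (Suc j) = Ym s j * Zp (Suc j) t"
      unfolding Ym_i using Ym_cong[of j "s(Suc j := t)" s] by simp
    then have "e (Suc j) * e j * g = e (Suc j) * e j * (Ym (s(Suc j := t)) (Suc j) * e (Suc j))"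
      using a by (simp add: mult.assoc)
    then show ?thesis using K1 by simp
  next
    case b
    have "e (Suc j) * e j * g = e (Suc j) * e j * (Ym s j * (e j * e (Suc j))) * Zp j t"
      using b C3 by (simp add: mult.assoc)
    then show ?thesis using Tg_rmult[OF K3] by simp
  next
    case c
    then show ?thesis using K2 by (simp add: mult.assoc)
  qed
qed

end

lemma stepI_nat: "\<bar>p\<bar> = int N \<Longrightarrow> e (Suc j) * Zp (Suc j) p * e (Suc j) \<in> sp Tg"
proof (induction N arbitrary: p rule: less_induct)
  case (less N)
  have H: "\<And>t. \<bar>t\<bar> \<le> \<bar>p\<bar> - 1 \<Longrightarrow> e (Suc j) * Zp (Suc j) t * e (Suc j) \<in> sp Tg"
  proof -
    fix t :: int assume t: "\<bar>t\<bar> \<le> \<bar>p\<bar> - 1"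
    have "nat \<bar>t\<bar> < N" using t less.prems by simp
    then show "e (Suc j) * Zp (Suc j) t * e (Suc j) \<in> sp Tg" using less.IH[of "nat \<bar>t\<bar>" t] by simp
  qed
  consider "p = 0" | "0 < p" | "p < 0" by linarith
  then show ?case
  proof cases
    case 1
    have "e (Suc j) * Zp (Suc j) p * e (Suc j) = \<phi> (A 0) * (Ym (\<lambda>_. 0) j * e (Suc j))"
      using 1 ee[OF oki] Ym_zero by simp
    then show ?thesis using sp_smult[OF Tg_mem] by simp
  next
    case 2
    have z: "Zp (Suc j) p = Yj (Suc j) * Zp (Suc j) (p - 1)"
      using zpow_succ[OF Zp_inv[OF jn(4,3)], of "p - 1"] by simp
    have "e (Suc j) * Zp (Suc j) p * e (Suc j) = e (Suc j) * X j * (Zp j 1 * (X j * Zp (Suc j) (p - 1) * e (Suc j)))"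
      unfolding z zpow_1 using W_l by (simp add: mult.assoc)
    also have "\<dots> = e (Suc j) * e j * (Xinv (Suc j) * (Zp j 1 * (X j * Zp (Suc j) (p - 1) * e (Suc j))))"
      unfolding eia by (simp add: mult.assoc)
    finally have eq: "e (Suc j) * Zp (Suc j) p * e (Suc j) = \<dots>" .
    have y: "Zp j 1 * (X j * Zp (Suc j) (p - 1) * e (Suc j)) \<in> sp (SS j (\<bar>p\<bar> - 1))"
      using SS_Z[OF G[of "p - 1"]] 2 by simp
    have "(e (Suc j) * e j * Xinv (Suc j)) * (Zp j 1 * (X j * Zp (Suc j) (p - 1) * e (Suc j))) \<in> sp Tg"
      by (rule sp_lmult[OF y]) (use Q1[of "\<bar>p\<bar> - 1", OF H] in \<open>simp add: mult.assoc\<close>)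
    then show ?thesis unfolding eq by (simp add: mult.assoc)
  next
    case 3
    have z: "Zp (Suc j) p = Yi (Suc j) * Zp (Suc j) (p + 1)"
      using zpow_pred[OF Zp_inv[OF jn(4,3)], of "p + 1"] by simp
    define y where "y = Zp j (-1) * (Xinv j * Zp (Suc j) (p + 1) * e (Suc j))"
    have y: "y \<in> sp (SS j (\<bar>p\<bar> - 1))" unfolding y_def using SS_Z[OF G'[of "p + 1"]] 3 by simp
    have "e (Suc j) * Zp (Suc j) p * e (Suc j) = e (Suc j) * Xinv j * y"
      unfolding z y_def zpow_m1 using W_l by (simp add: mult.assoc)
    also have "\<dots> = (e (Suc j) * X j - d * e (Suc j) + d * (e (Suc j) * e j)) * y"
      by (simp only: Xinv_exp_r[OF okj, of "e (Suc j)"])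
    also have "\<dots> = e (Suc j) * X j * y - d * (e (Suc j) * y) + d * (e (Suc j) * e j * y)"
      by (simp add: algebra_simps)
    also have "\<dots> = e (Suc j) * e j * Xinv (Suc j) * y - d * (e (Suc j) * y) + d * (e (Suc j) * e j * y)"
      unfolding eia ..
    finally have eq: "e (Suc j) * Zp (Suc j) p * e (Suc j) = \<dots>" .
    have A: "(e (Suc j) * e j * Xinv (Suc j)) * y \<in> sp Tg"
      by (rule sp_lmult[OF y]) (use Q1[of "\<bar>p\<bar> - 1", OF H] in \<open>simp add: mult.assoc\<close>)
    have B: "e (Suc j) * y \<in> sp Tg" by (rule sp_lmult[OF y]) (use Q2[of "\<bar>p\<bar> - 1", OF H] in simp)
    have C: "(e (Suc j) * e j) * y \<in> sp Tg" by (rule sp_lmult[OF y]) (use Q3[of "\<bar>p\<bar> - 1", OF H] in simp)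
    show ?thesis unfolding eq by (intro sp_add sp_diff sp_smult A B C)
  qed
qed

lemma stepI: "e (Suc j) * Zp (Suc j) p * e (Suc j) \<in> sp (T1 (Suc j))"
  using stepI_nat[of p "nat \<bar>p\<bar>"] by simp

end



context cb begin

lemma levelI: assumes k1: "1 \<le> k" shows "1 \<le> i \<Longrightarrow> i \<le> n - 1 \<Longrightarrow> e i * Zp i p * e i \<in> sp (T1 i)"
proof (induction i arbitrary: p rule: nat_induct_at_least)
  case base then show ?case using level1[OF k1] by simp
next
  case (Suc i)
  have oki: "ok i" and oki1: "ok (Suc i)" using Suc by auto
  have IJ: "\<And>p. e i * Zp i p * e i \<in> sp (T1 i)" using Suc by auto
  have IIIJ: "\<And>p. e i * Zp i p * X i \<in> sp (T3 i \<bar>p\<bar>)" using III[OF oki] IJ by blast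
  have "cbstep n k \<phi> qp qi lam lami qq A Y Yinv X Xinv e i"
    by (rule cbstep.intro[OF cb_axioms], rule cbstep_axioms.intro) (use oki oki1 IJ IIIJ in auto)
  then show ?case by (rule cbstep.stepI)
qed

end

theorem mainTheorem4:
  fixes n k :: nat
    and \<phi> :: "'r::comm_ring_1 \<Rightarrow> 'a::ring_1"
    and qp qi lam lami :: 'r and qq A :: "nat \<Rightarrow> 'r"
    and Y Yinv :: 'a and X Xinv e :: "nat \<Rightarrow> 'a"
    and i :: nat and p :: int
  assumes "1 \<le> n" and "1 \<le> k"
    and "qp * qi = 1" and "lam * lami = 1" and "qq 0 dvd 1"
    and "lam - lami = (qp - qi) * (1 - A 0)"
    and "is_R_algebra \<phi>"
    and "cbmw_rels n k \<phi> qp qi lam lami qq A Y Yinv X Xinv e"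
    and "1 \<le> i" and "i \<le> n - 1"
  shows "e i * zpow (Yp Y X i) (Yp Yinv Xinv i) p * e i
           \<in> rspan \<phi> {Ymon Y Yinv X Xinv s (i - 1) * e i | s. True} \<and>
         X i * zpow (Yp Y X i) (Yp Yinv Xinv i) p * e i
           \<in> rspan \<phi> {Ymon Y Yinv X Xinv s i * e i | s. \<bar>s i\<bar> \<le> \<bar>p\<bar>} \<and>
         e i * zpow (Yp Y X i) (Yp Yinv Xinv i) p * X i
           \<in> rspan \<phi> {e i * Ymon Y Yinv X Xinv s i | s. \<bar>s i\<bar> \<le> \<bar>p\<bar>}"
proof -
  interpret C: cb n k \<phi> qp qi lam lami qq A Y Yinv X Xinv e
    by (rule cb.intro) (use assms in auto)
  have oki: "1 \<le> i \<and> i \<le> n - 1" using assms by simp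
  have L: "\<And>t. e i * zpow (Yp Y X i) (Yp Yinv Xinv i) t * e i \<in> rspan \<phi> (C.T1 i)"
    using C.levelI[OF assms(2)] assms by blast
  have "X i * zpow (Yp Y X i) (Yp Yinv Xinv i) p * e i \<in> rspan \<phi> (C.T2 i \<bar>p\<bar>)"
    using C.II[OF oki] L by blast
  moreover have "e i * zpow (Yp Y X i) (Yp Yinv Xinv i) p * X i \<in> rspan \<phi> (C.T3 i \<bar>p\<bar>)"
    using C.III[OF oki] L by blast
  ultimately show ?thesis using L[of p] unfolding C.T1_def C.T2_def C.T3_def by blast
qed


end
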